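(* Let $\mathcal K$ be a 2-category and $\{\lambda_{i,j}:s_js_i\to s_is_j\}_{0\le i<j\le 2}$ a 0-cell of $\mathsf{Wdl}^{(2)}(\overline{\mathcal K})$. Define the 2-cells $\overrightarrow\lambda_{0,p,q}:=\mu_0s_ps_q.s_0\lambda_{0,p}s_q.s_0s_p\lambda_{0,q}.s_0s_ps_q\eta_0:s_0s_ps_q\to s_0s_ps_q$ for $(p,q)\in\{(1,2),(2,1)\}$, and $\overleftarrow\lambda_{k,l,2}:=s_ks_l\mu_2.s_k\lambda_{l,2}s_2.\lambda_{k,2}s_ls_2.\eta_2s_ks_ls_2:s_ks_ls_2\to s_ks_ls_2$ for $(k,l)\in\{(0,1),(1,0)\}$. These are idempotent 2-cells in $\mathcal K$ and satisfy: (1) $\overrightarrow\lambda_{0,p,q}.\bar\lambda_{0p}s_q=\overrightarrow\lambda_{0,p,q}=\bar\lambda_{0p}s_q.\overrightarrow\lambda_{0,p,q}$; (2) $\overrightarrow\lambda_{0,1,2}.s_0\lambda_{1,2}=s_0\lambda_{1,2}.\overrightarrow\lambda_{0,2,1}$; (3) $\overrightarrow\lambda_{0,p,q}.\lambda_{0,p}s_q=\lambda_{0,p}s_q.s_p\bar\lambda_{0q}$; (4) $\overleftarrow\lambda_{k,l,2}.s_k\bar\lambda_{l2}=\overleftarrow\lambda_{k,l,2}=s_k\bar\lambda_{l2}.\overleftarrow\lambda_{k,l,2}$; (5) $\overleftarrow\lambda_{0,1,2}.\lambda_{0,1}s_2=\lambda_{0,1}s_2.\overleftarrow\lambda_{1,0,2}$;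 (6) $\overleftarrow\lambda_{k,l,2}.s_k\lambda_{l,2}=s_k\lambda_{l,2}.\bar\lambda_{k2}s_l$; (7) $\overleftarrow\lambda_{0,1,2}.\overrightarrow\lambda_{0,1,2}=\overleftarrow\lambda_{0,1,2}.\bar\lambda_{01}s_2=\overrightarrow\lambda_{0,1,2}.s_0\bar\lambda_{12}=\overrightarrow\lambda_{0,1,2}.\overleftarrow\lambda_{0,1,2}$.
   Context: Conventions. For 1-cells, $uw$ is the horizontal composite ($w$ first); for 2-cells $\alpha,\beta$, $\alpha\beta$ is their horizontal composite; a 1-cell next to a 2-cell means whiskering by its identity 2-cell; $\alpha.\beta$ is vertical composition ($\beta$ first). A monad $(A,t)$ has multiplication $\mu:tt\to t$ and unit $\eta:1_A\to t$; indices carry over ($s_i$ has $\mu_i,\eta_i$). Local idempotent closure $\overline{\mathcal K}$: same 0-cells as $\mathcal K$; 1-cells are pairs $(v,\bar v)$ with $v$ a 1-cell of $\mathcal K$ and $\bar v:v\to v$ an idempotent 2-cell; 2-cells $(v,\bar v)\to(v',\bar v')$ are 2-cells $\omega:v\to v'$ of $\mathcal K$ with $\bar v'.\omega=\omega=\omega.\bar v$; compositions induced from $\mathcal K$, identity 2-cell of $(v,\bar v)$ is $\bar v$. A monad $(A,(t,\bar t))$ in $\overline{\mathcal K}$ satisfies in particular $\mu.t\eta=\mu.\eta t=\bar t$; we write just $t$. A weak distributive law in $\overline{\mathcal K}$: monads $(A,t),(A,s)$ in $\overline{\mathcal K}$ and a 2-cell $\lambda:ts\to st$ of $\overline{\mathcal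 K}$ with $\lambda.\mu s=s\mu.\lambda t.t\lambda$, $\lambda.t\mu=\mu t.s\lambda.\lambda s$, $\lambda.\eta s=\mu t.s\lambda.st\eta.s\eta$, $\lambda.t\eta=s\mu.\lambda t.\eta st.\eta t$; its idempotent is $\bar\lambda:=\mu t.s\lambda.st\eta=s\mu.\lambda t.\eta st$. A 0-cell of $\mathsf{Wdl}^{(2)}(\overline{\mathcal K})$ consists of monads $(A,s_0),(A,s_1),(A,s_2)$ in $\overline{\mathcal K}$ and weak distributive laws $\lambda_{i,j}:s_js_i\to s_is_j$ in $\overline{\mathcal K}$ ($0\le i<j\le2$) satisfying the Yang–Baxter relation $\lambda_{0,1}s_2.s_1\lambda_{0,2}.\lambda_{1,2}s_0=s_0\lambda_{1,2}.\lambda_{0,2}s_1.s_2\lambda_{0,1}$. $\bar\lambda_{ij}$ denotes the idempotent of $\lambda_{i,j}$. *)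

theory Defs
  imports Main
begin

text \<open>A (strict) 2-category, given by its 0-cells (type 'o), 1-cells (type 'm) and
2-cells (type 'c).  comp1 u w is the horizontal composite uw (w first),
vcomp a b is the vertical composite a.b (b first), hcomp a b the horizontal
composite ab of 2-cells, id1 and id2 are identities.\<close>

record ('o,'m,'c) twocat =
  src   :: "'m \<Rightarrow> 'o"
  tgt   :: "'m \<Rightarrow> 'o"
  comp1 :: "'m \<Rightarrow> 'm \<Rightarrow> 'm"
  id1   :: "'o \<Rightarrow> 'm"
  dom2  :: "'c \<Rightarrow> 'm"
  cod2  :: "'c \<Rightarrow> 'm"
  vcomp :: "'c \<Rightarrow> 'c \<Rightarrow> 'c"
  hcomp :: "'c \<Rightarrow> 'c \<Rightarrow> 'c"
  id2   :: "'m \<Rightarrow> 'c"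

locale two_category =
  fixes K :: "('o,'m,'c) twocat"
  assumes id1_src: "src K (id1 K x) = x"
    and id1_tgt: "tgt K (id1 K x) = x"
    and comp1_src: "src K u = tgt K w \<Longrightarrow> src K (comp1 K u w) = src K w"
    and comp1_tgt: "src K u = tgt K w \<Longrightarrow> tgt K (comp1 K u w) = tgt K u"
    and comp1_assoc: "src K u = tgt K v \<Longrightarrow> src K v = tgt K w \<Longrightarrow>
           comp1 K (comp1 K u v) w = comp1 K u (comp1 K v w)"
    and comp1_idl: "comp1 K (id1 K (tgt K u)) u = u"
    and comp1_idr: "comp1 K u (id1 K (src K u)) = u"
    and par_src: "src K (dom2 K a) = src K (cod2 K a)"
    and par_tgt: "tgt K (dom2 K a) = tgt K (cod2 K a)"
    and id2_dom: "dom2 K (id2 K u) = u"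
    and id2_cod: "cod2 K (id2 K u) = u"
    and vcomp_dom: "dom2 K a = cod2 K b \<Longrightarrow> dom2 K (vcomp K a b) = dom2 K b"
    and vcomp_cod: "dom2 K a = cod2 K b \<Longrightarrow> cod2 K (vcomp K a b) = cod2 K a"
    and vcomp_assoc: "dom2 K a = cod2 K b \<Longrightarrow> dom2 K b = cod2 K c \<Longrightarrow>
           vcomp K (vcomp K a b) c = vcomp K a (vcomp K b c)"
    and vcomp_idl: "vcomp K (id2 K (cod2 K a)) a = a"
    and vcomp_idr: "vcomp K a (id2 K (dom2 K a)) = a"
    and hcomp_dom: "src K (dom2 K a) = tgt K (dom2 K b) \<Longrightarrow>
           dom2 K (hcomp K a b) = comp1 K (dom2 K a) (dom2 K b)"
    and hcomp_cod: "src K (dom2 K a) = tgt K (dom2 K b) \<Longrightarrow>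
           cod2 K (hcomp K a b) = comp1 K (cod2 K a) (cod2 K b)"
    and hcomp_assoc: "src K (dom2 K a) = tgt K (dom2 K b) \<Longrightarrow> src K (dom2 K b) = tgt K (dom2 K c) \<Longrightarrow>
           hcomp K (hcomp K a b) c = hcomp K a (hcomp K b c)"
    and hcomp_idl: "hcomp K (id2 K (id1 K (tgt K (dom2 K a)))) a = a"
    and hcomp_idr: "hcomp K a (id2 K (id1 K (src K (dom2 K a)))) = a"
    and hcomp_id2: "src K u = tgt K w \<Longrightarrow> hcomp K (id2 K u) (id2 K w) = id2 K (comp1 K u w)"
    and interchange: "dom2 K a = cod2 K b \<Longrightarrow> dom2 K c = cod2 K d \<Longrightarrow>
           src K (dom2 K a) = tgt K (dom2 K c) \<Longrightarrow>
           hcomp K (vcomp K a b) (vcomp K c d) = vcomp K (hcomp K a c) (hcomp K b d)"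

text \<open>A 1-cell (t,tb) of the local idempotent closure: tb : t \<rightarrow> t idempotent.\<close>
definition idem_2cell :: "('o,'m,'c) twocat \<Rightarrow> 'm \<Rightarrow> 'c \<Rightarrow> bool" where
  "idem_2cell K v e \<longleftrightarrow> dom2 K e = v \<and> cod2 K e = v \<and> vcomp K e e = e"

text \<open>A 2-cell w : (v,vb) \<rightarrow> (v',vb') of the local idempotent closure.\<close>
definition cl_2cell :: "('o,'m,'c) twocat \<Rightarrow> 'm \<Rightarrow> 'c \<Rightarrow> 'm \<Rightarrow> 'c \<Rightarrow> 'c \<Rightarrow> bool" where
  "cl_2cell K v vb v' vb' w \<longleftrightarrow> dom2 K w = v \<and> cod2 K w = v' \<and>
      vcomp K vb' w = w \<and> w = vcomp K w vb"

text \<open>A monad (A,(t,tb)) with multiplication mu and unit eta in the local idempotent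
closure; whiskering by the 1-cell (t,tb) is horizontal composition with its identity 2-cell tb,
and the identity 1-cell of A is (1_A, identity 2-cell of 1_A).\<close>
definition cl_monad :: "('o,'m,'c) twocat \<Rightarrow> 'o \<Rightarrow> 'm \<Rightarrow> 'c \<Rightarrow> 'c \<Rightarrow> 'c \<Rightarrow> bool" where
  "cl_monad K A t tb mu eta \<longleftrightarrow>
     src K t = A \<and> tgt K t = A \<and> idem_2cell K t tb \<and>
     cl_2cell K (comp1 K t t) (hcomp K tb tb) t tb mu \<and>
     cl_2cell K (id1 K A) (id2 K (id1 K A)) t tb eta \<and>
     vcomp K mu (hcomp K mu tb) = vcomp K mu (hcomp K tb mu) \<and>
     vcomp K mu (hcomp K tb eta) = tb \<and>
     vcomp K mu (hcomp K eta tb) = tb"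

definition cl_wdl :: "('o,'m,'c) twocat \<Rightarrow> 'o \<Rightarrow> 'm \<Rightarrow> 'c \<Rightarrow> 'c \<Rightarrow> 'c \<Rightarrow>
                      'm \<Rightarrow> 'c \<Rightarrow> 'c \<Rightarrow> 'c \<Rightarrow> 'c \<Rightarrow> bool" where
  "cl_wdl K A t tb mut etat s sb mus etas l \<longleftrightarrow>
     cl_monad K A t tb mut etat \<and> cl_monad K A s sb mus etas \<and>
     cl_2cell K (comp1 K t s) (hcomp K tb sb) (comp1 K s t) (hcomp K sb tb) l \<and>
     vcomp K l (hcomp K mut sb) =
       vcomp K (hcomp K sb mut) (vcomp K (hcomp K l tb) (hcomp K tb l)) \<and>
     vcomp K l (hcomp K tb mus) =
       vcomp K (hcomp K mus tb) (vcomp K (hcomp K sb l) (hcomp K l sb)) \<and>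
     vcomp K l (hcomp K etat sb) =
       vcomp K (hcomp K mus tb) (vcomp K (hcomp K sb l)
         (vcomp K (hcomp K (hcomp K sb tb) etas) (hcomp K sb etat))) \<and>
     vcomp K l (hcomp K tb etas) =
       vcomp K (hcomp K sb mut) (vcomp K (hcomp K l tb)
         (vcomp K (hcomp K etat (hcomp K sb tb)) (hcomp K etas tb)))"

definition wdl_idem :: "('o,'m,'c) twocat \<Rightarrow> 'c \<Rightarrow> 'c \<Rightarrow> 'c \<Rightarrow> 'c \<Rightarrow> 'c \<Rightarrow> 'c" where
  "wdl_idem K tb sb mus etas l =
     vcomp K (hcomp K mus tb) (vcomp K (hcomp K sb l) (hcomp K (hcomp K sb tb) etas))"

text \<open>0-cells of Wdl^(2) of the local idempotent closure: monads s0,s1,s2 on A,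
weak distributive laws l_ij : s_j s_i \<rightarrow> s_i s_j (i<j) and the Yang-Baxter relation.\<close>
definition wdl2_cell :: "('o,'m,'c) twocat \<Rightarrow> 'o \<Rightarrow>
     'm \<Rightarrow> 'c \<Rightarrow> 'c \<Rightarrow> 'c \<Rightarrow> 'm \<Rightarrow> 'c \<Rightarrow> 'c \<Rightarrow> 'c \<Rightarrow> 'm \<Rightarrow> 'c \<Rightarrow> 'c \<Rightarrow> 'c \<Rightarrow>
     'c \<Rightarrow> 'c \<Rightarrow> 'c \<Rightarrow> bool" where
  "wdl2_cell K A s0 sb0 mu0 eta0 s1 sb1 mu1 eta1 s2 sb2 mu2 eta2 l01 l02 l12 \<longleftrightarrow>
     cl_wdl K A s1 sb1 mu1 eta1 s0 sb0 mu0 eta0 l01 \<and>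
     cl_wdl K A s2 sb2 mu2 eta2 s0 sb0 mu0 eta0 l02 \<and>
     cl_wdl K A s2 sb2 mu2 eta2 s1 sb1 mu1 eta1 l12 \<and>
     vcomp K (hcomp K l01 sb2) (vcomp K (hcomp K sb1 l02) (hcomp K l12 sb0)) =
     vcomp K (hcomp K sb0 l12) (vcomp K (hcomp K l02 sb1) (hcomp K sb2 l01))"

definition rlam :: "('o,'m,'c) twocat \<Rightarrow> 'm \<Rightarrow> 'c \<Rightarrow> 'c \<Rightarrow> 'm \<Rightarrow> 'm \<Rightarrow> 'c \<Rightarrow> 'c \<Rightarrow> 'c" where
  "rlam K s0 mu0 eta0 sp sq l0p l0q =
     vcomp K (hcomp K mu0 (id2 K (comp1 K sp sq)))
      (vcomp K (hcomp K (hcomp K (id2 K s0) l0p) (id2 K sq))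
       (vcomp K (hcomp K (id2 K (comp1 K s0 sp)) l0q)
        (hcomp K (id2 K (comp1 K s0 (comp1 K sp sq))) eta0)))"

definition llam :: "('o,'m,'c) twocat \<Rightarrow> 'm \<Rightarrow> 'm \<Rightarrow> 'm \<Rightarrow> 'c \<Rightarrow> 'c \<Rightarrow> 'c \<Rightarrow> 'c \<Rightarrow> 'c" where
  "llam K sk sl s2 mu2 eta2 lk2 ll2 =
     vcomp K (hcomp K (id2 K (comp1 K sk sl)) mu2)
      (vcomp K (hcomp K (hcomp K (id2 K sk) ll2) (id2 K s2))
       (vcomp K (hcomp K lk2 (id2 K (comp1 K sl s2)))
        (hcomp K eta2 (id2 K (comp1 K sk (comp1 K sl s2))))))"

end

theory Submission
  imports Defs
begin


locale tc = two_category K for K :: "('o,'m,'c) twocat" + fixes A :: 'o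
begin

definition ob :: "'m \<Rightarrow> bool" where "ob u \<longleftrightarrow> src K u = A \<and> tgt K u = A"
definition obs :: "'m list \<Rightarrow> bool" where "obs xs \<longleftrightarrow> list_all ob xs"

fun cs :: "'m list \<Rightarrow> 'm" where
  "cs [] = id1 K A" | "cs (x#xs) = comp1 K x (cs xs)"

abbreviation vc (infixr "\<odot>" 55) where "a \<odot> b \<equiv> vcomp K a b"

lemma obs_simps[simp]: "obs [] = True" "obs (x#xs) = (ob x \<and> obs xs)" "obs (xs@ys) = (obs xs \<and> obs ys)"
  by (auto simp: obs_def)

lemma cs_ob: "obs xs \<Longrightarrow> src K (cs xs) = A \<and> tgt K (cs xs) = A"
  by (induction xs) (auto simp: id1_src id1_tgt ob_def comp1_src comp1_tgt)

lemma cs_src[simp]: "obs xs \<Longrightarrow> src K (cs xs) = A" and cs_tgt[simp]: "obs xs \<Longrightarrow> tgt K (cs xs) = A"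
  using cs_ob by auto

lemma cs_app: "obs xs \<Longrightarrow> obs ys \<Longrightarrow> comp1 K (cs xs) (cs ys) = cs (xs @ ys)"
proof (induction xs)
  case Nil
  then show ?case using comp1_idl[of "cs ys"] by simp
next
  case (Cons x xs)
  then show ?case by (simp add: comp1_assoc ob_def)
qed

lemma cs_single: "ob x \<Longrightarrow> cs [x] = x"
  using comp1_idr[of x] by (simp add: ob_def)

definition hom :: "'c \<Rightarrow> 'm list \<Rightarrow> 'm list \<Rightarrow> bool" where
  "hom g D C \<longleftrightarrow> obs D \<and> obs C \<and> dom2 K g = cs D \<and> cod2 K g = cs C"

definition E :: "'m list \<Rightarrow> 'c" where "E X = id2 K (cs X)"

definition Wh :: "'m list \<Rightarrow> 'c \<Rightarrow> 'm list \<Rightarrow> 'c" where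
  "Wh u x w = hcomp K (E u) (hcomp K x (E w))"

definition F :: "'m list \<Rightarrow> 'm list \<Rightarrow> 'c \<Rightarrow> 'm list \<Rightarrow> 'm list \<Rightarrow> 'c" where
  "F u D g C w = Wh u g w"

lemma hom_E: "obs X \<Longrightarrow> hom (E X) X X"
  by (simp add: hom_def E_def id2_dom id2_cod)

lemma hom_hcomp: "hom a D C \<Longrightarrow> hom b D' C' \<Longrightarrow> hom (hcomp K a b) (D@D') (C@C')"
  unfolding hom_def by (simp add: hcomp_dom hcomp_cod cs_app)

lemma hom_vcomp: "hom a D C \<Longrightarrow> hom b D' D \<Longrightarrow> hom (vcomp K a b) D' C"
  unfolding hom_def by (simp add: vcomp_dom vcomp_cod)

lemma hom_Wh: "hom x D C \<Longrightarrow> obs u \<Longrightarrow> obs w \<Longrightarrow> hom (Wh u x w) (u@D@w) (u@C@w)"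
  unfolding Wh_def by (intro hom_hcomp hom_E) auto

lemma E_app: "obs X \<Longrightarrow> obs Y \<Longrightarrow> hcomp K (E X) (E Y) = E (X@Y)"
  unfolding E_def by (simp add: hcomp_id2 cs_app)

lemma E_nil: "E [] = id2 K (id1 K A)" by (simp add: E_def)

lemma hcomp_E_nil_l: "hom x D C \<Longrightarrow> hcomp K (E []) x = x"
  using hcomp_idl[of x] unfolding hom_def E_def by simp

lemma hcomp_E_nil_r: "hom x D C \<Longrightarrow> hcomp K x (E []) = x"
  using hcomp_idr[of x] unfolding hom_def E_def by simp

lemma hassoc: "hom a D C \<Longrightarrow> hom b D' C' \<Longrightarrow> hom c D'' C'' \<Longrightarrow>
   hcomp K (hcomp K a b) c = hcomp K a (hcomp K b c)"
  unfolding hom_def by (intro hcomp_assoc) auto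

lemma vassoc: "hom a D C \<Longrightarrow> hom b D' D \<Longrightarrow> hom c D'' D' \<Longrightarrow>
   vcomp K (vcomp K a b) c = vcomp K a (vcomp K b c)"
  unfolding hom_def by (intro vcomp_assoc) auto

lemma vid_l: "hom a D C \<Longrightarrow> vcomp K (E C) a = a"
  using vcomp_idl[of a] unfolding hom_def E_def by simp

lemma vid_r: "hom a D C \<Longrightarrow> vcomp K a (E D) = a"
  using vcomp_idr[of a] unfolding hom_def E_def by simp

lemma xchg: "hom a D C \<Longrightarrow> hom a' C C' \<Longrightarrow> hom b P Q \<Longrightarrow> hom b' Q Q' \<Longrightarrow>
  hcomp K (vcomp K a' a) (vcomp K b' b) = vcomp K (hcomp K a' b') (hcomp K a b)"
  unfolding hom_def by (intro interchange) auto

lemma hom_obs: "hom x D C \<Longrightarrow> obs D \<and> obs C" by (simp add: hom_def)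

lemma Wh_nil: "hom x D C \<Longrightarrow> Wh [] x [] = x"
  unfolding Wh_def by (simp add: hcomp_E_nil_l hcomp_E_nil_r)

lemma Wh_E: "obs u \<Longrightarrow> obs X \<Longrightarrow> obs w \<Longrightarrow> Wh u (E X) w = E (u@X@w)"
  unfolding Wh_def by (simp add: E_app)

lemma hcomp_V1: "hom x D C \<Longrightarrow> hom y D' D \<Longrightarrow> obs w \<Longrightarrow>
   hcomp K (vcomp K x y) (E w) = vcomp K (hcomp K x (E w)) (hcomp K y (E w))"
proof -
  assume h: "hom x D C" "hom y D' D" "obs w"
  have "hcomp K (vcomp K x y) (E w) = hcomp K (vcomp K x y) (vcomp K (E w) (E w))"
    using vid_l[OF hom_E[of w]] h by simp
  also have "\<dots> = vcomp K (hcomp K x (E w)) (hcomp K y (E w))"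
    using h by (intro xchg[OF h(2) h(1)]) (auto intro: hom_E)
  finally show ?thesis .
qed

lemma hcomp_V2: "hom x D C \<Longrightarrow> hom y D' D \<Longrightarrow> obs w \<Longrightarrow>
   hcomp K (E w) (vcomp K x y) = vcomp K (hcomp K (E w) x) (hcomp K (E w) y)"
proof -
  assume h: "hom x D C" "hom y D' D" "obs w"
  have "hcomp K (E w) (vcomp K x y) = hcomp K (vcomp K (E w) (E w)) (vcomp K x y)"
    using vid_l[OF hom_E[of w]] h by simp
  also have "\<dots> = vcomp K (hcomp K (E w) x) (hcomp K (E w) y)"
    using h by (intro xchg[OF hom_E hom_E h(2) h(1)]) (auto intro: hom_E)
  finally show ?thesis .
qed

lemma Wh_V: "hom x D C \<Longrightarrow> hom y D' D \<Longrightarrow> obs u \<Longrightarrow> obs w \<Longrightarrow>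
   Wh u (vcomp K x y) w = vcomp K (Wh u x w) (Wh u y w)"
proof -
  assume h: "hom x D C" "hom y D' D" "obs u" "obs w"
  have a: "hom (hcomp K x (E w)) (D@w) (C@w)" "hom (hcomp K y (E w)) (D'@w) (D@w)"
    using h by (auto intro: hom_hcomp hom_E)
  show ?thesis unfolding Wh_def
    using h by (simp add: hcomp_V1[OF h(1) h(2)] hcomp_V2[OF a])
qed

lemma Wh_Wh: "hom x D C \<Longrightarrow> obs u \<Longrightarrow> obs w \<Longrightarrow> obs u' \<Longrightarrow> obs w' \<Longrightarrow>
   Wh u (Wh u' x w') w = Wh (u@u') x (w'@w)"
proof -
  assume h: "hom x D C" "obs u" "obs w" "obs u'" "obs w'"
  have "hcomp K (hcomp K (E u') (hcomp K x (E w'))) (E w) = hcomp K (E u') (hcomp K (hcomp K x (E w')) (E w))"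
    using h by (intro hassoc) (auto intro: hom_E hom_hcomp)
  also have "hcomp K (hcomp K x (E w')) (E w) = hcomp K x (E (w'@w))"
    using h by (simp add: hassoc[OF h(1) hom_E hom_E] E_app)
  finally have 1: "hcomp K (hcomp K (E u') (hcomp K x (E w'))) (E w) = hcomp K (E u') (hcomp K x (E (w' @ w)))" .
  have hx: "hom (hcomp K x (E (w' @ w))) (D@w'@w) (C@w'@w)" using h by (intro hom_hcomp hom_E) auto
  have "hcomp K (E u) (hcomp K (E u') (hcomp K x (E (w' @ w)))) = hcomp K (hcomp K (E u) (E u')) (hcomp K x (E (w' @ w)))"
    using h by (intro hassoc[OF hom_E hom_E hx, symmetric])
  then show ?thesis unfolding Wh_def 1 using h by (simp add: E_app)
qed

lemma hcomp_split1: "hom x D C \<Longrightarrow> hom y D' C' \<Longrightarrow>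
   hcomp K x y = vcomp K (Wh [] x C') (Wh D y [])"
proof -
  assume h: "hom x D C" "hom y D' C'"
  then have o: "obs D" "obs C" "obs D'" "obs C'" by (auto simp: hom_def)
  have "hcomp K x y = hcomp K (vcomp K x (E D)) (vcomp K (E C') y)"
    using h by (simp add: vid_l vid_r)
  also have "\<dots> = vcomp K (hcomp K x (E C')) (hcomp K (E D) y)"
    using h o by (intro xchg[OF hom_E h(1) h(2) hom_E]) auto
  finally show ?thesis using h o unfolding Wh_def
    by (simp add: hcomp_E_nil_l[OF hom_hcomp[OF h(1) hom_E]] hcomp_E_nil_r[OF h(2)] hcomp_E_nil_l[OF hom_hcomp[OF hom_E h(2)]]
       hcomp_E_nil_r[OF h(1)])
qed

lemma hcomp_split2: "hom x D C \<Longrightarrow> hom y D' C' \<Longrightarrow>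
   hcomp K x y = vcomp K (Wh C y []) (Wh [] x D')"
proof -
  assume h: "hom x D C" "hom y D' C'"
  then have o: "obs D" "obs C" "obs D'" "obs C'" by (auto simp: hom_def)
  have "hcomp K x y = hcomp K (vcomp K (E C) x) (vcomp K y (E D'))"
    using h by (simp add: vid_l vid_r)
  also have "\<dots> = vcomp K (hcomp K (E C) y) (hcomp K x (E D'))"
    using h o by (intro xchg[OF h(1) hom_E hom_E h(2)]) auto
  finally show ?thesis using h o unfolding Wh_def
    by (simp add: hcomp_E_nil_l[OF hom_hcomp[OF h(1) hom_E]] hcomp_E_nil_r[OF h(2)] hcomp_E_nil_l[OF hom_hcomp[OF hom_E h(2)]]
       hcomp_E_nil_r[OF h(1)])
qed

lemma comm0: "hom a D1 C1 \<Longrightarrow> hom b D2 C2 \<Longrightarrow> obs u \<Longrightarrow> obs m \<Longrightarrow> obs w \<Longrightarrow>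
  vcomp K (Wh u a (m@C2@w)) (Wh (u@D1@m) b w) = vcomp K (Wh (u@C1@m) b w) (Wh u a (m@D2@w))"
proof -
  assume h: "hom a D1 C1" "hom b D2 C2" "obs u" "obs m" "obs w"
  then have o: "obs D1" "obs C1" "obs D2" "obs C2" by (auto simp: hom_def)
  have hb: "hom (Wh m b []) (m@D2) (m@C2)" using hom_Wh[OF h(2) h(4), of "[]"] by simp
  have "Wh u (hcomp K a (Wh m b [])) w = vcomp K (Wh u a (m@C2@w)) (Wh (u@D1@m) b w)"
    using h o hb hom_Wh[OF h(1), of "[]" "m@C2"] hom_Wh[OF h(2), of "D1@m" "[]"]
    by (simp add: hcomp_split1[OF h(1) hb] Wh_V[where D="D1@m@C2"] Wh_Wh)
  moreover have "Wh u (hcomp K a (Wh m b [])) w = vcomp K (Wh (u@C1@m) b w) (Wh u a (m@D2@w))"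
    using h o hb hom_Wh[OF h(1), of "[]" "m@D2"] hom_Wh[OF h(2), of "C1@m" "[]"]
    by (simp add: hcomp_split2[OF h(1) hb] Wh_V[where D="C1@m@D2"] Wh_Wh)
  ultimately show ?thesis by simp
qed


declare cs.simps[simp del]

lemma cs_app_simp[simp]: "obs xs \<Longrightarrow> obs ys \<Longrightarrow> comp1 K (cs xs) (cs ys) = cs (xs @ ys)"
  by (rule cs_app)

lemma F_dom[simp]: "hom g D C \<Longrightarrow> obs u \<Longrightarrow> obs w \<Longrightarrow> dom2 K (F u D g C w) = cs (u@D@w)"
  using hom_Wh unfolding F_def hom_def by blast
lemma F_cod[simp]: "hom g D C \<Longrightarrow> obs u \<Longrightarrow> obs w \<Longrightarrow> cod2 K (F u D g C w) = cs (u@C@w)"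
  using hom_Wh unfolding F_def hom_def by blast
lemma E_dom[simp]: "dom2 K (E X) = cs X" and E_cod[simp]: "cod2 K (E X) = cs X"
  by (simp_all add: E_def id2_dom id2_cod)
lemma V_dom[simp]: "dom2 K a = cod2 K b \<Longrightarrow> dom2 K (a \<odot> b) = dom2 K b"
  by (rule vcomp_dom)
lemma V_cod[simp]: "dom2 K a = cod2 K b \<Longrightarrow> cod2 K (a \<odot> b) = cod2 K a"
  by (rule vcomp_cod)

lemma vassoc': "dom2 K a = cod2 K b \<Longrightarrow> dom2 K b = cod2 K c \<Longrightarrow> (a \<odot> b) \<odot> c = a \<odot> (b \<odot> c)"
  by (rule vcomp_assoc)

lemma commL_rest: "hom a D1 C1 \<Longrightarrow> hom b D2 C2 \<Longrightarrow> obs u \<Longrightarrow> obs m \<Longrightarrow> obs w \<Longrightarrow>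
   cod2 K r = cs (u@D1@m@D2@w) \<Longrightarrow>
   F u D1 a C1 (m@C2@w) \<odot> (F (u@D1@m) D2 b C2 w \<odot> r) = F (u@C1@m) D2 b C2 w \<odot> (F u D1 a C1 (m@D2@w) \<odot> r)"
proof -
  assume h: "hom a D1 C1" "hom b D2 C2" "obs u" "obs m" "obs w" "cod2 K r = cs (u@D1@m@D2@w)"
  then have o: "obs D1" "obs C1" "obs D2" "obs C2" by (auto simp: hom_def)
  have "F u D1 a C1 (m@C2@w) \<odot> (F (u@D1@m) D2 b C2 w \<odot> r) = (F u D1 a C1 (m@C2@w) \<odot> F (u@D1@m) D2 b C2 w) \<odot> r"
    using h o by (intro vassoc'[symmetric]) auto
  also have "\<dots> = (F (u@C1@m) D2 b C2 w \<odot> F u D1 a C1 (m@D2@w)) \<odot> r"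
    unfolding F_def using comm0[OF h(1-5)] by simp
  also have "\<dots> = F (u@C1@m) D2 b C2 w \<odot> (F u D1 a C1 (m@D2@w) \<odot> r)"
    using h o by (intro vassoc') auto
  finally show ?thesis .
qed

text \<open>simp-usable: outer factor left of inner factor gets swapped\<close>
lemma comm_simp: "hom a D1 C1 \<Longrightarrow> hom b D2 C2 \<Longrightarrow> obs u1 \<Longrightarrow> obs w1 \<Longrightarrow> obs u2 \<Longrightarrow> obs w2 \<Longrightarrow>
   u2 = u1 @ D1 @ drop (length u1 + length D1) u2 \<Longrightarrow>
   w1 = drop (length u1 + length D1) u2 @ C2 @ w2 \<Longrightarrow>
   cod2 K r = cs (u2@D2@w2) \<Longrightarrow>
   F u1 D1 a C1 w1 \<odot> (F u2 D2 b C2 w2 \<odot> r) =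
   F (u1@C1@drop (length u1 + length D1) u2) D2 b C2 w2 \<odot> (F u1 D1 a C1 (drop (length u1 + length D1) u2@D2@w2) \<odot> r)"
proof -
  assume h: "hom a D1 C1" "hom b D2 C2" "obs u1" "obs w1" "obs u2" "obs w2"
     "u2 = u1 @ D1 @ drop (length u1 + length D1) u2"
     "w1 = drop (length u1 + length D1) u2 @ C2 @ w2" "cod2 K r = cs (u2@D2@w2)"
  define m where "m = drop (length u1 + length D1) u2"
  have om: "obs m" using h(5) h(7) unfolding m_def[symmetric] by (metis obs_simps(3))
  show ?thesis unfolding m_def[symmetric] using commL_rest[OF h(1,2,3) om h(6)] h(7,8,9) unfolding m_def[symmetric]
    by (metis append.assoc)
qed


definition G :: "'m list \<Rightarrow> 'm \<Rightarrow> 'c \<Rightarrow> 'm list \<Rightarrow> 'c" where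
  "G u x e w = Wh u e w"

lemma G_dom[simp]: "hom e [x] [x] \<Longrightarrow> obs u \<Longrightarrow> obs w \<Longrightarrow> dom2 K (G u x e w) = cs (u@x#w)"
  using hom_Wh[of e "[x]" "[x]" u w] unfolding G_def hom_def by auto
lemma G_cod[simp]: "hom e [x] [x] \<Longrightarrow> obs u \<Longrightarrow> obs w \<Longrightarrow> cod2 K (G u x e w) = cs (u@x#w)"
  using hom_Wh[of e "[x]" "[x]" u w] unfolding G_def hom_def by auto

lemma commWh_rest: "hom a D1 C1 \<Longrightarrow> hom b D2 C2 \<Longrightarrow> obs u \<Longrightarrow> obs m \<Longrightarrow> obs w \<Longrightarrow>
   cod2 K r = cs (u@D1@m@D2@w) \<Longrightarrow>
   Wh u a (m@C2@w) \<odot> (Wh (u@D1@m) b w \<odot> r) = Wh (u@C1@m) b w \<odot> (Wh u a (m@D2@w) \<odot> r)"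
  using commL_rest[of a D1 C1 b D2 C2 u m w r] unfolding F_def by simp

lemma commWh_rest': "hom a D1 C1 \<Longrightarrow> hom b D2 C2 \<Longrightarrow> obs u \<Longrightarrow> obs m \<Longrightarrow> obs w \<Longrightarrow>
   cod2 K r = cs (u@D1@m@D2@w) \<Longrightarrow>
   Wh (u@C1@m) b w \<odot> (Wh u a (m@D2@w) \<odot> r) = Wh u a (m@C2@w) \<odot> (Wh (u@D1@m) b w \<odot> r)"
proof -
  assume h: "hom a D1 C1" "hom b D2 C2" "obs u" "obs m" "obs w" "cod2 K r = cs (u@D1@m@D2@w)"
  then have o: "obs D1" "obs C1" "obs D2" "obs C2" by (auto simp: hom_def)
  have t1: "hom (Wh (u@C1@m) b w) (u@C1@m@D2@w) (u@C1@m@C2@w)" "hom (Wh u a (m@D2@w)) (u@D1@m@D2@w) (u@C1@m@D2@w)"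
     "hom (Wh u a (m@C2@w)) (u@D1@m@C2@w) (u@C1@m@C2@w)" "hom (Wh (u@D1@m) b w) (u@D1@m@D2@w) (u@D1@m@C2@w)"
    using h o hom_Wh[OF h(2), of "u@C1@m" w] hom_Wh[OF h(1), of u "m@D2@w"] hom_Wh[OF h(1), of u "m@C2@w"]
       hom_Wh[OF h(2), of "u@D1@m" w] by auto
  have "Wh (u@C1@m) b w \<odot> (Wh u a (m@D2@w) \<odot> r) = (Wh (u@C1@m) b w \<odot> Wh u a (m@D2@w)) \<odot> r"
    using t1 h unfolding hom_def by (intro vassoc'[symmetric]) auto
  also have "\<dots> = (Wh u a (m@C2@w) \<odot> Wh (u@D1@m) b w) \<odot> r"
    using comm0[OF h(1-5)] by simp
  also have "\<dots> = Wh u a (m@C2@w) \<odot> (Wh (u@D1@m) b w \<odot> r)"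
    using t1 h unfolding hom_def by (intro vassoc') auto
  finally show ?thesis .
qed

lemma obs_drop: "obs xs \<Longrightarrow> obs (drop n xs)"
  unfolding obs_def by (simp add: list_all_iff) (meson in_set_dropD)

lemma upL: "hom a D1 C1 \<Longrightarrow> hom e [x] [x] \<Longrightarrow> obs u1 \<Longrightarrow> obs w1 \<Longrightarrow> obs u2 \<Longrightarrow> obs w2 \<Longrightarrow>
   u2 = u1 @ D1 @ drop (length u1 + length D1) u2 \<Longrightarrow>
   w1 = drop (length u1 + length D1) u2 @ x # w2 \<Longrightarrow>
   cod2 K r = cs (u2@x#w2) \<Longrightarrow>
   F u1 D1 a C1 w1 \<odot> (G u2 x e w2 \<odot> r) =
   G (u1@C1@drop (length u1 + length D1) u2) x e w2 \<odot> (F u1 D1 a C1 (drop (length u1 + length D1) u2 @ x # w2) \<odot> r)"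
proof -
  assume h: "hom a D1 C1" "hom e [x] [x]" "obs u1" "obs w1" "obs u2" "obs w2"
     "u2 = u1 @ D1 @ drop (length u1 + length D1) u2"
     "w1 = drop (length u1 + length D1) u2 @ x # w2" "cod2 K r = cs (u2@x#w2)"
  define m where "m = drop (length u1 + length D1) u2"
  have om: "obs m" using h(5) obs_drop unfolding m_def by auto
  have h7: "u2 = u1 @ D1 @ m" and h8: "w1 = m @ x # w2" using h(7,8) unfolding m_def by auto
  show ?thesis unfolding m_def[symmetric] using commWh_rest[OF h(1,2,3) om h(6), of r] h(9)
    unfolding F_def G_def h7 h8 by simp
qed

lemma upR: "hom b D1 C1 \<Longrightarrow> hom e [x] [x] \<Longrightarrow> obs u1 \<Longrightarrow> obs w1 \<Longrightarrow> obs u2 \<Longrightarrow> obs w2 \<Longrightarrow>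
   u1 = u2 @ x # drop (Suc (length u2)) u1 \<Longrightarrow>
   w2 = drop (Suc (length u2)) u1 @ D1 @ w1 \<Longrightarrow>
   cod2 K r = cs (u2@x#w2) \<Longrightarrow>
   F u1 D1 b C1 w1 \<odot> (G u2 x e w2 \<odot> r) =
   G u2 x e (drop (Suc (length u2)) u1 @ C1 @ w1) \<odot> (F u1 D1 b C1 w1 \<odot> r)"
proof -
  assume h: "hom b D1 C1" "hom e [x] [x]" "obs u1" "obs w1" "obs u2" "obs w2"
     "u1 = u2 @ x # drop (Suc (length u2)) u1"
     "w2 = drop (Suc (length u2)) u1 @ D1 @ w1" "cod2 K r = cs (u2@x#w2)"
  define m where "m = drop (Suc (length u2)) u1"
  have om: "obs m" using h(3) obs_drop unfolding m_def by auto
  have h7: "u1 = u2 @ x # m" and h8: "w2 = m @ D1 @ w1" using h(7,8) unfolding m_def by auto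
  show ?thesis unfolding m_def[symmetric] using commWh_rest'[OF h(2,1,5) om h(4), of r] h(9)
    unfolding F_def G_def h7 h8 by simp
qed

lemma downL: "hom b D2 C2 \<Longrightarrow> hom e [x] [x] \<Longrightarrow> obs u1 \<Longrightarrow> obs w1 \<Longrightarrow> obs u2 \<Longrightarrow> obs w2 \<Longrightarrow>
   u2 = u1 @ x # drop (Suc (length u1)) u2 \<Longrightarrow>
   w1 = drop (Suc (length u1)) u2 @ C2 @ w2 \<Longrightarrow>
   cod2 K r = cs (u2@D2@w2) \<Longrightarrow>
   G u1 x e w1 \<odot> (F u2 D2 b C2 w2 \<odot> r) =
   F u2 D2 b C2 w2 \<odot> (G u1 x e (drop (Suc (length u1)) u2 @ D2 @ w2) \<odot> r)"
proof -
  assume h: "hom b D2 C2" "hom e [x] [x]" "obs u1" "obs w1" "obs u2" "obs w2"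
     "u2 = u1 @ x # drop (Suc (length u1)) u2"
     "w1 = drop (Suc (length u1)) u2 @ C2 @ w2" "cod2 K r = cs (u2@D2@w2)"
  define m where "m = drop (Suc (length u1)) u2"
  have om: "obs m" using h(5) obs_drop unfolding m_def by auto
  have h7: "u2 = u1 @ x # m" and h8: "w1 = m @ C2 @ w2" using h(7,8) unfolding m_def by auto
  show ?thesis unfolding m_def[symmetric] using commWh_rest[OF h(2,1,3) om h(6), of r] h(9)
    unfolding F_def G_def h7 h8 by simp
qed

lemma downR: "hom b D2 C2 \<Longrightarrow> hom e [x] [x] \<Longrightarrow> obs u1 \<Longrightarrow> obs w1 \<Longrightarrow> obs u2 \<Longrightarrow> obs w2 \<Longrightarrow>
   u1 = u2 @ C2 @ drop (length u2 + length C2) u1 \<Longrightarrow>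
   w2 = drop (length u2 + length C2) u1 @ x # w1 \<Longrightarrow>
   cod2 K r = cs (u2@D2@w2) \<Longrightarrow>
   G u1 x e w1 \<odot> (F u2 D2 b C2 w2 \<odot> r) =
   F u2 D2 b C2 w2 \<odot> (G (u2 @ D2 @ drop (length u2 + length C2) u1) x e w1 \<odot> r)"
proof -
  assume h: "hom b D2 C2" "hom e [x] [x]" "obs u1" "obs w1" "obs u2" "obs w2"
     "u1 = u2 @ C2 @ drop (length u2 + length C2) u1"
     "w2 = drop (length u2 + length C2) u1 @ x # w1" "cod2 K r = cs (u2@D2@w2)"
  define m where "m = drop (length u2 + length C2) u1"
  have om: "obs m" using h(3) obs_drop unfolding m_def by auto
  have h7: "u1 = u2 @ C2 @ m" and h8: "w2 = m @ x # w1" using h(7,8) unfolding m_def by auto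
  show ?thesis unfolding m_def[symmetric] using commWh_rest'[OF h(1,2,5) om h(4), of r] h(9)
    unfolding F_def G_def h7 h8 by simp
qed



definition aout :: "'c \<Rightarrow> 'm list \<Rightarrow> nat \<Rightarrow> 'c \<Rightarrow> bool" where
  "aout g C k e \<longleftrightarrow> Wh (take k C) e (drop (Suc k) C) \<odot> g = g"
definition ain :: "'c \<Rightarrow> 'm list \<Rightarrow> nat \<Rightarrow> 'c \<Rightarrow> bool" where
  "ain g D k e \<longleftrightarrow> g \<odot> Wh (take k D) e (drop (Suc k) D) = g"

lemma obs_take: "obs xs \<Longrightarrow> obs (take n xs)"
  unfolding obs_def by (simp add: list_all_iff) (meson in_set_takeD)

lemma absorb_out: "hom g D C \<Longrightarrow> hom e [x] [x] \<Longrightarrow> obs u \<Longrightarrow> obs w \<Longrightarrow>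
   u' = u @ take (length u' - length u) C \<Longrightarrow> w' = drop (Suc (length u' - length u)) C @ w \<Longrightarrow>
   take (length u' - length u) C @ x # drop (Suc (length u' - length u)) C = C \<Longrightarrow>
   aout g C (length u' - length u) e \<Longrightarrow> cod2 K r = cs (u@D@w) \<Longrightarrow>
   G u' x e w' \<odot> (F u D g C w \<odot> r) = F u D g C w \<odot> r"
proof -
  assume h: "hom g D C" "hom e [x] [x]" "obs u" "obs w"
   "u' = u @ take (length u' - length u) C" "w' = drop (Suc (length u' - length u)) C @ w"
   "take (length u' - length u) C @ x # drop (Suc (length u' - length u)) C = C"
   "aout g C (length u' - length u) e" "cod2 K r = cs (u@D@w)"
  define k where "k = length u' - length u"
  have o: "obs D" "obs C" "ob x" using h(1,2) unfolding hom_def by auto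
  have o2: "obs (take k C)" "obs (drop (Suc k) C)" using o obs_take obs_drop by auto
  have he: "hom (Wh (take k C) e (drop (Suc k) C)) C C" using hom_Wh[OF h(2) o2] h(7) unfolding k_def by simp
  have 1: "G u' x e w' = Wh u (Wh (take k C) e (drop (Suc k) C)) w"
    unfolding G_def using h(5,6) Wh_Wh[OF h(2) h(3,4) o2] unfolding k_def by simp
  have "G u' x e w' \<odot> (F u D g C w \<odot> r) = (G u' x e w' \<odot> F u D g C w) \<odot> r"
    using 1 he h hom_Wh[OF he h(3,4)] unfolding hom_def F_def by (intro vassoc'[symmetric]) (auto simp: hom_Wh[OF h(1) h(3,4), unfolded hom_def])
  also have "G u' x e w' \<odot> F u D g C w = Wh u (Wh (take k C) e (drop (Suc k) C) \<odot> g) w"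
    unfolding 1 F_def using Wh_V[OF he h(1) h(3,4)] by simp
  also have "\<dots> = F u D g C w" using h(8) unfolding aout_def k_def F_def by simp
  finally show ?thesis .
qed

lemma absorb_in: "hom g D C \<Longrightarrow> hom e [x] [x] \<Longrightarrow> obs u \<Longrightarrow> obs w \<Longrightarrow>
   u' = u @ take (length u' - length u) D \<Longrightarrow> w' = drop (Suc (length u' - length u)) D @ w \<Longrightarrow>
   take (length u' - length u) D @ x # drop (Suc (length u' - length u)) D = D \<Longrightarrow>
   ain g D (length u' - length u) e \<Longrightarrow> cod2 K r = cs (u@D@w) \<Longrightarrow>
   F u D g C w \<odot> (G u' x e w' \<odot> r) = F u D g C w \<odot> r"
proof -
  assume h: "hom g D C" "hom e [x] [x]" "obs u" "obs w"
   "u' = u @ take (length u' - length u) D" "w' = drop (Suc (length u' - length u)) D @ w"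
   "take (length u' - length u) D @ x # drop (Suc (length u' - length u)) D = D"
   "ain g D (length u' - length u) e" "cod2 K r = cs (u@D@w)"
  define k where "k = length u' - length u"
  have o: "obs D" "obs C" "ob x" using h(1,2) unfolding hom_def by auto
  have o2: "obs (take k D)" "obs (drop (Suc k) D)" using o obs_take obs_drop by auto
  have he: "hom (Wh (take k D) e (drop (Suc k) D)) D D" using hom_Wh[OF h(2) o2] h(7) unfolding k_def by simp
  have 1: "G u' x e w' = Wh u (Wh (take k D) e (drop (Suc k) D)) w"
    unfolding G_def using h(5,6) Wh_Wh[OF h(2) h(3,4) o2] unfolding k_def by simp
  have "F u D g C w \<odot> (G u' x e w' \<odot> r) = (F u D g C w \<odot> G u' x e w') \<odot> r"
    using 1 he h hom_Wh[OF he h(3,4)] unfolding hom_def F_def by (intro vassoc'[symmetric]) (auto simp: hom_Wh[OF h(1) h(3,4), unfolded hom_def])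
  also have "F u D g C w \<odot> G u' x e w' = Wh u (g \<odot> Wh (take k D) e (drop (Suc k) D)) w"
    unfolding 1 F_def using Wh_V[OF h(1) he h(3,4)] by simp
  also have "\<dots> = F u D g C w" using h(8) unfolding ain_def k_def F_def by simp
  finally show ?thesis .
qed

lemma absorb_GG: "hom e [x] [x] \<Longrightarrow> e \<odot> e = e \<Longrightarrow> obs u \<Longrightarrow> obs w \<Longrightarrow> cod2 K r = cs (u@x#w) \<Longrightarrow>
   G u x e w \<odot> (G u x e w \<odot> r) = G u x e w \<odot> r"
proof -
  assume h: "hom e [x] [x]" "e \<odot> e = e" "obs u" "obs w" "cod2 K r = cs (u@x#w)"
  have "G u x e w \<odot> (G u x e w \<odot> r) = (G u x e w \<odot> G u x e w) \<odot> r"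
    using h by (intro vassoc'[symmetric]) (auto simp: hom_def)
  also have "G u x e w \<odot> G u x e w = G u x e w" unfolding G_def using Wh_V[OF h(1) h(1) h(3,4)] h(2) by simp
  finally show ?thesis .
qed

lemma Wh_V': "dom2 K x = cod2 K y \<Longrightarrow> src K (dom2 K x) = A \<Longrightarrow> tgt K (dom2 K x) = A \<Longrightarrow>
   src K (dom2 K y) = A \<Longrightarrow> tgt K (dom2 K y) = A \<Longrightarrow> obs u \<Longrightarrow> obs w \<Longrightarrow>
   Wh u (x \<odot> y) w = Wh u x w \<odot> Wh u y w"
proof -
  assume h: "dom2 K x = cod2 K y" "src K (dom2 K x) = A" "tgt K (dom2 K x) = A"
   "src K (dom2 K y) = A" "tgt K (dom2 K y) = A" "obs u" "obs w"
  have ew: "E w \<odot> E w = E w" "E u \<odot> E u = E u" using vid_l[OF hom_E[of w]] vid_l[OF hom_E[of u]] h by auto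
  have 1: "hcomp K (x \<odot> y) (E w) = hcomp K x (E w) \<odot> hcomp K y (E w)"
    using interchange[of x y "E w" "E w"] ew h by (simp add: E_def id2_dom id2_cod)
  have d: "dom2 K (hcomp K x (E w)) = cod2 K (hcomp K y (E w))" "tgt K (dom2 K (hcomp K x (E w))) = A"
    using h by (auto simp: hcomp_dom hcomp_cod comp1_tgt)
  have 2: "hcomp K (E u) (hcomp K x (E w) \<odot> hcomp K y (E w)) = hcomp K (E u) (hcomp K x (E w)) \<odot> hcomp K (E u) (hcomp K y (E w))"
    using interchange[of "E u" "E u" "hcomp K x (E w)" "hcomp K y (E w)"] ew h d by simp
  show ?thesis unfolding Wh_def 1 2 ..
qed

lemma Wh_F: "hom g D C \<Longrightarrow> obs u \<Longrightarrow> obs w \<Longrightarrow> obs u' \<Longrightarrow> obs w' \<Longrightarrow>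
   Wh u (F u' D g C w') w = F (u@u') D g C (w'@w)"
  unfolding F_def by (rule Wh_Wh)
lemma Wh_G: "hom e [x] [x] \<Longrightarrow> obs u \<Longrightarrow> obs w \<Longrightarrow> obs u' \<Longrightarrow> obs w' \<Longrightarrow>
   Wh u (G u' x e w') w = G (u@u') x e (w'@w)"
  unfolding G_def by (rule Wh_Wh)
lemma Wh_E': "obs u \<Longrightarrow> obs X \<Longrightarrow> obs w \<Longrightarrow> Wh u (E X) w = E (u@X@w)"
  by (rule Wh_E)

lemmas chain_simps = Wh_V' Wh_F Wh_G Wh_E' vassoc'

lemma F_nil: "hom g D C \<Longrightarrow> F [] D g C [] = g" unfolding F_def by (rule Wh_nil)
lemma G_nil: "hom e [x] [x] \<Longrightarrow> G [] x e [] = e" unfolding G_def by (rule Wh_nil)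

lemma hom_cs: "hom g D C \<Longrightarrow> dom2 K g = cs D \<and> cod2 K g = cs C" by (simp add: hom_def)



lemma GG_L: "hom e [x] [x] \<Longrightarrow> hom e' [y] [y] \<Longrightarrow> obs u1 \<Longrightarrow> obs w1 \<Longrightarrow> obs u2 \<Longrightarrow> obs w2 \<Longrightarrow>
   u2 = u1 @ x # drop (Suc (length u1)) u2 \<Longrightarrow>
   w1 = drop (Suc (length u1)) u2 @ y # w2 \<Longrightarrow>
   cod2 K r = cs (u2@y#w2) \<Longrightarrow>
   G u1 x e w1 \<odot> (G u2 y e' w2 \<odot> r) =
   G u2 y e' w2 \<odot> (G u1 x e (drop (Suc (length u1)) u2 @ y # w2) \<odot> r)"
proof -
  assume h: "hom e [x] [x]" "hom e' [y] [y]" "obs u1" "obs w1" "obs u2" "obs w2"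
     "u2 = u1 @ x # drop (Suc (length u1)) u2"
     "w1 = drop (Suc (length u1)) u2 @ y # w2" "cod2 K r = cs (u2@y#w2)"
  define m where "m = drop (Suc (length u1)) u2"
  have om: "obs m" using h(5) obs_drop unfolding m_def by auto
  have h7: "u2 = u1 @ x # m" and h8: "w1 = m @ y # w2" using h(7,8) unfolding m_def by auto
  show ?thesis unfolding m_def[symmetric] using commWh_rest[OF h(1,2,3) om h(6), of r] h(9)
    unfolding F_def G_def h7 h8 by simp
qed

lemma hc_absorb_in: "hom p (X@Y) Z \<Longrightarrow> hom e1 X X \<Longrightarrow> hom e2 Y Y \<Longrightarrow> e1 \<odot> e1 = e1 \<Longrightarrow> e2 \<odot> e2 = e2 \<Longrightarrow>
   p \<odot> hcomp K e1 e2 = p \<Longrightarrow> p \<odot> Wh [] e1 Y = p \<and> p \<odot> Wh X e2 [] = p"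
proof -
  assume h: "hom p (X@Y) Z" "hom e1 X X" "hom e2 Y Y" "e1 \<odot> e1 = e1" "e2 \<odot> e2 = e2" "p \<odot> hcomp K e1 e2 = p"
  have o: "obs X" "obs Y" using h hom_obs by auto
  have a: "hom (Wh [] e1 Y) (X@Y) (X@Y)" "hom (Wh X e2 []) (X@Y) (X@Y)"
    using hom_Wh[OF h(2), of "[]" Y] hom_Wh[OF h(3), of X "[]"] o by auto
  have s1: "hcomp K e1 e2 = Wh [] e1 Y \<odot> Wh X e2 []" using hcomp_split1[OF h(2,3)] .
  have s2: "hcomp K e1 e2 = Wh X e2 [] \<odot> Wh [] e1 Y" using hcomp_split2[OF h(2,3)] .
  have i1: "Wh [] e1 Y \<odot> Wh [] e1 Y = Wh [] e1 Y" using Wh_V[OF h(2) h(2), of "[]" Y] o h(4) by simp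
  have i2: "Wh X e2 [] \<odot> Wh X e2 [] = Wh X e2 []" using Wh_V[OF h(3) h(3), of X "[]"] o h(5) by simp
  have "p \<odot> Wh [] e1 Y = (p \<odot> (Wh X e2 [] \<odot> Wh [] e1 Y)) \<odot> Wh [] e1 Y" using h(6) s2 by simp
  also have "\<dots> = p \<odot> (Wh X e2 [] \<odot> (Wh [] e1 Y \<odot> Wh [] e1 Y))"
    using a h(1) by (simp add: vassoc[of _ "X@Y" _ _ "X@Y"] hom_vcomp[OF a(2) a(1)])
  also have "\<dots> = p" using i1 s2 h(6) by simp
  finally have 1: "p \<odot> Wh [] e1 Y = p" .
  have "p \<odot> Wh X e2 [] = (p \<odot> (Wh [] e1 Y \<odot> Wh X e2 [])) \<odot> Wh X e2 []" using h(6) s1 by simp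
  also have "\<dots> = p \<odot> (Wh [] e1 Y \<odot> (Wh X e2 [] \<odot> Wh X e2 []))"
    using a h(1) by (simp add: vassoc[of _ "X@Y" _ _ "X@Y"] hom_vcomp[OF a(1) a(2)])
  also have "\<dots> = p" using i2 s1 h(6) by simp
  finally show ?thesis using 1 by simp
qed

lemma hc_absorb_out: "hom p Z (X@Y) \<Longrightarrow> hom e1 X X \<Longrightarrow> hom e2 Y Y \<Longrightarrow> e1 \<odot> e1 = e1 \<Longrightarrow> e2 \<odot> e2 = e2 \<Longrightarrow>
   hcomp K e1 e2 \<odot> p = p \<Longrightarrow> Wh [] e1 Y \<odot> p = p \<and> Wh X e2 [] \<odot> p = p"
proof -
  assume h: "hom p Z (X@Y)" "hom e1 X X" "hom e2 Y Y" "e1 \<odot> e1 = e1" "e2 \<odot> e2 = e2" "hcomp K e1 e2 \<odot> p = p"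
  have o: "obs X" "obs Y" using h hom_obs by auto
  have a: "hom (Wh [] e1 Y) (X@Y) (X@Y)" "hom (Wh X e2 []) (X@Y) (X@Y)"
    using hom_Wh[OF h(2), of "[]" Y] hom_Wh[OF h(3), of X "[]"] o by auto
  have s1: "hcomp K e1 e2 = Wh [] e1 Y \<odot> Wh X e2 []" using hcomp_split1[OF h(2,3)] .
  have s2: "hcomp K e1 e2 = Wh X e2 [] \<odot> Wh [] e1 Y" using hcomp_split2[OF h(2,3)] .
  have i1: "Wh [] e1 Y \<odot> Wh [] e1 Y = Wh [] e1 Y" using Wh_V[OF h(2) h(2), of "[]" Y] o h(4) by simp
  have i2: "Wh X e2 [] \<odot> Wh X e2 [] = Wh X e2 []" using Wh_V[OF h(3) h(3), of X "[]"] o h(5) by simp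
  have "Wh [] e1 Y \<odot> p = Wh [] e1 Y \<odot> ((Wh [] e1 Y \<odot> Wh X e2 []) \<odot> p)" using h(6) s1 by simp
  also have "\<dots> = ((Wh [] e1 Y \<odot> Wh [] e1 Y) \<odot> Wh X e2 []) \<odot> p"
    using a h(1) by (simp add: vassoc[of _ "X@Y" _ _ "X@Y"] hom_vcomp[OF a(1) a(2)])
  also have "\<dots> = p" using i1 s1 h(6) by simp
  finally have 1: "Wh [] e1 Y \<odot> p = p" .
  have "Wh X e2 [] \<odot> p = Wh X e2 [] \<odot> ((Wh X e2 [] \<odot> Wh [] e1 Y) \<odot> p)" using h(6) s2 by simp
  also have "\<dots> = ((Wh X e2 [] \<odot> Wh X e2 []) \<odot> Wh [] e1 Y) \<odot> p"
    using a h(1) by (simp add: vassoc[of _ "X@Y" _ _ "X@Y"] hom_vcomp[OF a(2) a(1)])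
  also have "\<dots> = p" using i2 s2 h(6) by simp
  finally show ?thesis using 1 by simp
qed

lemma cs_nil: "cs [] = id1 K A" by (simp add: cs.simps)

lemma cs_two: "ob x \<Longrightarrow> ob y \<Longrightarrow> cs [x,y] = comp1 K x y"
  using cs_single[of y] by (simp add: cs.simps)

lemma E_left: "cod2 K r = cs X \<Longrightarrow> E X \<odot> r = r"
  unfolding E_def using vcomp_idl[of r] by simp

text \<open>simp-usable: outer factor right of inner factor gets swapped\<close>
lemma commR_simp: "hom a D1 C1 \<Longrightarrow> hom b D2 C2 \<Longrightarrow> obs u1 \<Longrightarrow> obs w1 \<Longrightarrow> obs u2 \<Longrightarrow> obs w2 \<Longrightarrow>
   u1 = u2 @ C2 @ drop (length u2 + length C2) u1 \<Longrightarrow>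
   w2 = drop (length u2 + length C2) u1 @ D1 @ w1 \<Longrightarrow>
   cod2 K r = cs (u2@D2@w2) \<Longrightarrow>
   F u1 D1 a C1 w1 \<odot> (F u2 D2 b C2 w2 \<odot> r) =
   F u2 D2 b C2 (drop (length u2 + length C2) u1 @ C1 @ w1) \<odot> (F (u2@D2@drop (length u2 + length C2) u1) D1 a C1 w1 \<odot> r)"
proof -
  assume h: "hom a D1 C1" "hom b D2 C2" "obs u1" "obs w1" "obs u2" "obs w2"
     "u1 = u2 @ C2 @ drop (length u2 + length C2) u1"
     "w2 = drop (length u2 + length C2) u1 @ D1 @ w1" "cod2 K r = cs (u2@D2@w2)"
  define m where "m = drop (length u2 + length C2) u1"
  have om: "obs m" using h(3) obs_drop unfolding m_def by auto
  have h7: "u1 = u2 @ C2 @ m" and h8: "w2 = m @ D1 @ w1" using h(7,8) unfolding m_def by auto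
  show ?thesis unfolding m_def[symmetric] using commWh_rest'[OF h(2,1,5) om h(4), of r] h(9)
    unfolding F_def h7 h8 by simp
qed

lemmas up_rules
 = upL upR GG_L absorb_in absorb_out absorb_GG
lemmas down_rules = downL downR GG_L absorb_in absorb_out absorb_GG

end

locale mon = tc K A for K :: "('o,'m,'c) twocat" and A +
  fixes t :: 'm and tb mu eta :: 'c
  assumes mon: "cl_monad K A t tb mu eta"
begin

lemma ob_t[simp]: "ob t" using mon unfolding cl_monad_def ob_def by auto

lemma hom_tb[simp]: "hom tb [t] [t]"
  using mon unfolding cl_monad_def idem_2cell_def hom_def by (simp add: cs_single)
lemma hom_mu[simp]: "hom mu [t,t] [t]"
  using mon unfolding cl_monad_def cl_2cell_def hom_def by (simp add: cs_single cs_two)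
lemma hom_eta[simp]: "hom eta [] [t]"
  using mon unfolding cl_monad_def cl_2cell_def hom_def by (simp add: cs_single cs_nil)
lemma tb_idem[simp]: "tb \<odot> tb = tb" using mon unfolding cl_monad_def idem_2cell_def by auto

lemma mu_abs: "mu \<odot> Wh [] tb [t] = mu \<and> mu \<odot> Wh [t] tb [] = mu"
  using mon unfolding cl_monad_def cl_2cell_def by (intro hc_absorb_in[where Z="[t]"]) auto

lemma a_facts[simp]: "ain mu [t,t] 0 tb" "ain mu [t,t] (Suc 0) tb" "aout mu [t] 0 tb" "aout eta [t] 0 tb"
  "ain tb [t] 0 tb" "aout tb [t] 0 tb"
  using mu_abs mon unfolding ain_def aout_def cl_monad_def cl_2cell_def
  by (auto simp: Wh_nil[OF hom_tb])

lemma mu_assoc0: "F [] [t,t] mu [t] [] \<odot> F [] [t,t] mu [t] [t] = F [] [t,t] mu [t] [] \<odot> F [t] [t,t] mu [t] []"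
proof -
  have 1: "hcomp K mu tb = Wh [t] tb [] \<odot> Wh [] mu [t]" using hcomp_split2[OF hom_mu hom_tb] .
  have 2: "hcomp K tb mu = Wh [] tb [t] \<odot> Wh [t] mu []" using hcomp_split1[OF hom_tb hom_mu] .
  have h: "hom (Wh [t] tb []) [t,t] [t,t]" "hom (Wh [] mu [t]) [t,t,t] [t,t]"
     "hom (Wh [] tb [t]) [t,t] [t,t]" "hom (Wh [t] mu []) [t,t,t] [t,t]"
    using hom_Wh[OF hom_tb, of "[t]" "[]"] hom_Wh[OF hom_mu, of "[]" "[t]"]
      hom_Wh[OF hom_tb, of "[]" "[t]"] hom_Wh[OF hom_mu, of "[t]" "[]"] by auto
  have "mu \<odot> Wh [] mu [t] = mu \<odot> hcomp K mu tb"
    unfolding 1 using mu_abs h by (simp add: vassoc[symmetric, OF hom_mu h(1) h(2)])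
  also have "\<dots> = mu \<odot> hcomp K tb mu" using mon unfolding cl_monad_def by simp
  also have "\<dots> = mu \<odot> Wh [t] mu []"
    unfolding 2 using mu_abs h by (simp add: vassoc[symmetric, OF hom_mu h(3) h(4)])
  finally show ?thesis unfolding F_nil[OF hom_mu] by (simp add: F_def)
qed

lemma mu_unitR0: "F [] [t,t] mu [t] [] \<odot> F [t] [] eta [t] [] = G [] t tb []"
proof -
  have 2: "hcomp K tb eta = Wh [] tb [t] \<odot> Wh [t] eta []" using hcomp_split1[OF hom_tb hom_eta] .
  have h: "hom (Wh [] tb [t]) [t,t] [t,t]" "hom (Wh [t] eta []) [t] [t,t]"
    using hom_Wh[OF hom_tb, of "[]" "[t]"] hom_Wh[OF hom_eta, of "[t]" "[]"] by auto
  have "mu \<odot> Wh [t] eta [] = mu \<odot> hcomp K tb eta"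
    unfolding 2 using mu_abs h by (simp add: vassoc[symmetric, OF hom_mu h(1) h(2)])
  also have "\<dots> = tb" using mon unfolding cl_monad_def by simp
  finally show ?thesis unfolding F_nil[OF hom_mu] G_nil[OF hom_tb] by (simp add: F_def)
qed

lemma mu_unitL0: "F [] [t,t] mu [t] [] \<odot> F [] [] eta [t] [t] = G [] t tb []"
proof -
  have 2: "hcomp K eta tb = Wh [t] tb [] \<odot> Wh [] eta [t]" using hcomp_split2[OF hom_eta hom_tb] .
  have h: "hom (Wh [t] tb []) [t,t] [t,t]" "hom (Wh [] eta [t]) [t] [t,t]"
    using hom_Wh[OF hom_tb, of "[t]" "[]"] hom_Wh[OF hom_eta, of "[]" "[t]"] by auto
  have "mu \<odot> Wh [] eta [t] = mu \<odot> hcomp K eta tb"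
    unfolding 2 using mu_abs h by (simp add: vassoc[symmetric, OF hom_mu h(1) h(2)])
  also have "\<dots> = tb" using mon unfolding cl_monad_def by simp
  finally show ?thesis unfolding F_nil[OF hom_mu] G_nil[OF hom_tb] by (simp add: F_def)
qed

lemma mu_assoc_lr: "u' = u @ [t] \<Longrightarrow> w' = w \<Longrightarrow> obs u \<Longrightarrow> obs w \<Longrightarrow> cod2 K r = cs (u@[t,t,t]@w) \<Longrightarrow>
  F u [t,t] mu [t] w \<odot> (F u' [t,t] mu [t] w' \<odot> r) = F u [t,t] mu [t] w \<odot> (F u [t,t] mu [t] (t#w) \<odot> r)"
  using arg_cong[OF mu_assoc0, of "\<lambda>X. Wh u X w \<odot> r"] by (simp add: chain_simps)

lemma mu_assoc_rl: "u' = u \<Longrightarrow> w' = t#w \<Longrightarrow> obs u \<Longrightarrow> obs w \<Longrightarrow> cod2 K r = cs (u@[t,t,t]@w) \<Longrightarrow>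
  F u [t,t] mu [t] w \<odot> (F u' [t,t] mu [t] w' \<odot> r) = F u [t,t] mu [t] w \<odot> (F (u@[t]) [t,t] mu [t] w \<odot> r)"
  using arg_cong[OF mu_assoc0, of "\<lambda>X. Wh u X w \<odot> r"] by (simp add: chain_simps)

lemma mu_unitR: "u' = u @ [t] \<Longrightarrow> w' = w \<Longrightarrow> obs u \<Longrightarrow> obs w \<Longrightarrow> cod2 K r = cs (u@[t]@w) \<Longrightarrow>
  F u [t,t] mu [t] w \<odot> (F u' [] eta [t] w' \<odot> r) = G u t tb w \<odot> r"
  using arg_cong[OF mu_unitR0, of "\<lambda>X. Wh u X w \<odot> r"] by (simp add: chain_simps)

lemma mu_unitL: "u' = u \<Longrightarrow> w' = t#w \<Longrightarrow> obs u \<Longrightarrow> obs w \<Longrightarrow> cod2 K r = cs (u@[t]@w) \<Longrightarrow>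
  F u [t,t] mu [t] w \<odot> (F u' [] eta [t] w' \<odot> r) = G u t tb w \<odot> r"
  using arg_cong[OF mu_unitL0, of "\<lambda>X. Wh u X w \<odot> r"] by (simp add: chain_simps)

end


locale wdl = tc K A + T: mon K A t tb mut etat + S: mon K A s sb mus etas
  for K :: "('o,'m,'c) twocat" and A t tb mut etat s sb mus etas +
  fixes l :: 'c
  assumes wdl: "cl_wdl K A t tb mut etat s sb mus etas l"
begin

lemma hom_l[simp]: "hom l [t,s] [s,t]"
  using wdl unfolding cl_wdl_def cl_2cell_def hom_def by (simp add: cs_two)

lemma l_abs: "l \<odot> Wh [] tb [s] = l \<and> l \<odot> Wh [t] sb [] = l" "Wh [] sb [t] \<odot> l = l \<and> Wh [s] tb [] \<odot> l = l"
  using wdl unfolding cl_wdl_def cl_2cell_def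
  by (intro hc_absorb_in[where Z="[s,t]"] hc_absorb_out[where Z="[t,s]"]; simp)+

lemma l_afacts[simp]: "ain l [t,s] 0 tb" "ain l [t,s] (Suc 0) sb" "aout l [s,t] 0 sb" "aout l [s,t] (Suc 0) tb"
  using l_abs unfolding ain_def aout_def by auto

lemmas WhFG = F_def[of _ "[t,t]" mut "[t]", symmetric] F_def[of _ "[]" etat "[t]", symmetric]
  F_def[of _ "[s,s]" mus "[s]", symmetric] F_def[of _ "[]" etas "[s]", symmetric]
  F_def[of _ "[t,s]" l "[s,t]", symmetric] G_def[of _ t tb, symmetric] G_def[of _ s sb, symmetric]

lemma ax: "l \<odot> hcomp K mut sb = hcomp K sb mut \<odot> (hcomp K l tb \<odot> hcomp K tb l)"
  "l \<odot> hcomp K tb mus = hcomp K mus tb \<odot> (hcomp K sb l \<odot> hcomp K l sb)"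
  "l \<odot> hcomp K etat sb = hcomp K mus tb \<odot> (hcomp K sb l \<odot> (hcomp K (hcomp K sb tb) etas \<odot> hcomp K sb etat))"
  "l \<odot> hcomp K tb etas = hcomp K sb mut \<odot> (hcomp K l tb \<odot> (hcomp K etat (hcomp K sb tb) \<odot> hcomp K etas tb))"
  using wdl unfolding cl_wdl_def by auto

lemma axA0: "F [] [t,s] l [s,t] [] \<odot> (F [] [t,t] mut [t] [s] \<odot> E [t,t,s]) =
   F [s] [t,t] mut [t] [] \<odot> (F [] [t,s] l [s,t] [t] \<odot> (F [t] [t,s] l [s,t] [] \<odot> E [t,t,s]))"
proof -
  have "(Wh [] l [] \<odot> hcomp K mut sb) \<odot> E [t,t,s] = (hcomp K sb mut \<odot> (hcomp K l tb \<odot> hcomp K tb l)) \<odot> E [t,t,s]"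
    using ax(1) Wh_nil[OF hom_l] by simp
  then show ?thesis
    unfolding hcomp_split1[OF T.hom_mu S.hom_tb] hcomp_split2[OF S.hom_tb T.hom_mu]
      hcomp_split2[OF hom_l T.hom_tb] hcomp_split1[OF T.hom_tb hom_l]
    by (simp add: WhFG chain_simps; (simp add: up_rules)?; (simp add: down_rules)?)
qed

lemma n1: "hcomp K (hcomp K sb tb) etas = F [s,t] [] etas [s] [] \<odot> (G [] s sb [t] \<odot> G [s] t tb [])"
  unfolding hcomp_split2[OF hom_hcomp[OF S.hom_tb T.hom_tb] S.hom_eta] Wh_nil[OF hom_hcomp[OF S.hom_tb T.hom_tb]]
  unfolding hcomp_split1[OF S.hom_tb T.hom_tb] by (simp add: WhFG)

lemma n2: "hcomp K etat (hcomp K sb tb) = G [t] s sb [t] \<odot> (G [t,s] t tb [] \<odot> F [] [] etat [t] [s,t])"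
proof -
  have "hcomp K etat (hcomp K sb tb) = Wh [t] (hcomp K sb tb) [] \<odot> Wh [] etat [s,t]"
    using hcomp_split2[OF T.hom_eta hom_hcomp[OF S.hom_tb T.hom_tb]] by simp
  then show ?thesis unfolding hcomp_split1[OF S.hom_tb T.hom_tb] by (simp add: WhFG chain_simps)
qed

lemma axB0: "F [] [t,s] l [s,t] [] \<odot> (F [t] [s,s] mus [s] [] \<odot> E [t,s,s]) =
   F [] [s,s] mus [s] [t] \<odot> (F [s] [t,s] l [s,t] [] \<odot> (F [] [t,s] l [s,t] [s] \<odot> E [t,s,s]))"
proof -
  have "(Wh [] l [] \<odot> hcomp K tb mus) \<odot> E [t,s,s] = (hcomp K mus tb \<odot> (hcomp K sb l \<odot> hcomp K l sb)) \<odot> E [t,s,s]"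
    using ax(2) Wh_nil[OF hom_l] by simp
  then show ?thesis
    unfolding hcomp_split1[OF T.hom_tb S.hom_mu] hcomp_split2[OF S.hom_mu T.hom_tb]
      hcomp_split2[OF S.hom_tb hom_l] hcomp_split1[OF hom_l S.hom_tb]
    by (simp add: WhFG chain_simps; (simp add: up_rules)?; (simp add: down_rules)?)
qed

lemma axC0: "F [] [t,s] l [s,t] [] \<odot> (F [] [] etat [t] [s] \<odot> E [s]) =
   F [] [s,s] mus [s] [t] \<odot> (F [s] [t,s] l [s,t] [] \<odot> (F [s,t] [] etas [s] [] \<odot> (F [s] [] etat [t] [] \<odot> E [s])))"
proof -
  have "(Wh [] l [] \<odot> hcomp K etat sb) \<odot> E [s] = (hcomp K mus tb \<odot> (hcomp K sb l \<odot> (hcomp K (hcomp K sb tb) etas \<odot> hcomp K sb etat))) \<odot> E [s]"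
    using ax(3) Wh_nil[OF hom_l] by simp
  then show ?thesis
    unfolding n1 hcomp_split2[OF T.hom_eta S.hom_tb] hcomp_split2[OF S.hom_mu T.hom_tb]
      hcomp_split2[OF S.hom_tb hom_l] hcomp_split2[OF S.hom_tb T.hom_eta]
    by (simp add: WhFG chain_simps; (simp add: up_rules)?; (simp add: down_rules)?)
qed

lemma axD0: "F [] [t,s] l [s,t] [] \<odot> (F [t] [] etas [s] [] \<odot> E [t]) =
   F [s] [t,t] mut [t] [] \<odot> (F [] [t,s] l [s,t] [t] \<odot> (F [] [] etat [t] [s,t] \<odot> (F [] [] etas [s] [t] \<odot> E [t])))"
proof -
  have "(Wh [] l [] \<odot> hcomp K tb etas) \<odot> E [t] = (hcomp K sb mut \<odot> (hcomp K l tb \<odot> (hcomp K etat (hcomp K sb tb) \<odot> hcomp K etas tb))) \<odot> E [t]"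
    using ax(4) Wh_nil[OF hom_l] by simp
  then show ?thesis
    unfolding n2 hcomp_split1[OF T.hom_tb S.hom_eta] hcomp_split2[OF S.hom_tb T.hom_mu]
      hcomp_split2[OF hom_l T.hom_tb] hcomp_split2[OF S.hom_eta T.hom_tb]
    by (simp add: WhFG chain_simps; (simp add: up_rules)?; (simp add: down_rules)?)
qed

lemma idem0: "wdl_idem K tb sb mus etas l \<odot> E [s,t] = F [] [s,s] mus [s] [t] \<odot> (F [s] [t,s] l [s,t] [] \<odot> (F [s,t] [] etas [s] [] \<odot> E [s,t]))"
  unfolding wdl_idem_def n1 hcomp_split2[OF S.hom_mu T.hom_tb] hcomp_split2[OF S.hom_tb hom_l]
  by (simp add: WhFG chain_simps; (simp add: up_rules)?; (simp add: down_rules)?)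

lemma idem0': "vcomp K (hcomp K sb mut) (vcomp K (hcomp K l tb) (hcomp K etat (hcomp K sb tb))) \<odot> E [s,t] =
   F [s] [t,t] mut [t] [] \<odot> (F [] [t,s] l [s,t] [t] \<odot> (F [] [] etat [t] [s,t] \<odot> E [s,t]))"
  unfolding n2 hcomp_split2[OF S.hom_tb T.hom_mu] hcomp_split2[OF hom_l T.hom_tb]
  by (simp add: WhFG chain_simps; (simp add: up_rules)?; (simp add: down_rules)?)


abbreviation "MT u w \<equiv> F u [t,t] mut [t] w"
abbreviation "HT u w \<equiv> F u [] etat [t] w"
abbreviation "MS u w \<equiv> F u [s,s] mus [s] w"
abbreviation "HS u w \<equiv> F u [] etas [s] w"
abbreviation "LL u w \<equiv> F u [t,s] l [s,t] w"

lemma axA: "obs u \<Longrightarrow> obs w \<Longrightarrow> cod2 K r = cs (u@[t,t,s]@w) \<Longrightarrow>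
  LL u w \<odot> (MT u (s#w) \<odot> r) = MT (u@[s]) w \<odot> (LL u (t#w) \<odot> (LL (u@[t]) w \<odot> r))"
  using arg_cong[OF axA0, of "\<lambda>X. Wh u X w \<odot> r"] by (simp add: chain_simps E_left)
lemma axB: "obs u \<Longrightarrow> obs w \<Longrightarrow> cod2 K r = cs (u@[t,s,s]@w) \<Longrightarrow>
  LL u w \<odot> (MS (u@[t]) w \<odot> r) = MS u (t#w) \<odot> (LL (u@[s]) w \<odot> (LL u (s#w) \<odot> r))"
  using arg_cong[OF axB0, of "\<lambda>X. Wh u X w \<odot> r"] by (simp add: chain_simps E_left)
lemma axC: "obs u \<Longrightarrow> obs w \<Longrightarrow> cod2 K r = cs (u@[s]@w) \<Longrightarrow>
  LL u w \<odot> (HT u (s#w) \<odot> r) = MS u (t#w) \<odot> (LL (u@[s]) w \<odot> (HS (u@[s,t]) w \<odot> (HT (u@[s]) w \<odot> r)))"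
  using arg_cong[OF axC0, of "\<lambda>X. Wh u X w \<odot> r"] by (simp add: chain_simps E_left)
lemma axD: "obs u \<Longrightarrow> obs w \<Longrightarrow> cod2 K r = cs (u@[t]@w) \<Longrightarrow>
  LL u w \<odot> (HS (u@[t]) w \<odot> r) = MT (u@[s]) w \<odot> (LL u (t#w) \<odot> (HT u (s#t#w) \<odot> (HS u (t#w) \<odot> r)))"
  using arg_cong[OF axD0, of "\<lambda>X. Wh u X w \<odot> r"] by (simp add: chain_simps E_left)

lemma lam_E0: "MS [] [t] \<odot> (LL [s] [] \<odot> (HS [s,t] [] \<odot> (LL [] [] \<odot> E [t,s]))) = LL [] [] \<odot> E [t,s]"
proof -
  have "MS [] [t] \<odot> (LL [s] [] \<odot> (HS [s,t] [] \<odot> (LL [] [] \<odot> E [t,s]))) =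
        MS [] [t] \<odot> (LL [s] [] \<odot> (LL [] [s] \<odot> (HS [t,s] [] \<odot> E [t,s])))"
    by (simp add: commR_simp)
  also have "\<dots> = LL [] [] \<odot> (MS [t] [] \<odot> (HS [t,s] [] \<odot> E [t,s]))"
    using axB[of "[]" "[]"] by simp
  also have "\<dots> = LL [] [] \<odot> E [t,s]"
    by (simp add: S.mu_unitR up_rules)
  finally show ?thesis .
qed


lemma lam_E: "obs u \<Longrightarrow> obs w \<Longrightarrow> cod2 K r = cs (u@[t,s]@w) \<Longrightarrow>
  MS u (t#w) \<odot> (LL (u@[s]) w \<odot> (HS (u@[s,t]) w \<odot> (LL u w \<odot> r))) = LL u w \<odot> r"
  using arg_cong[OF lam_E0, of "\<lambda>X. Wh u X w \<odot> r"] by (simp add: chain_simps E_left)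

lemma lamAbs1_0: "MS [] [t] \<odot> (LL [s] [] \<odot> (MS [] [t,s] \<odot> (LL [s] [s] \<odot> (HS [s,t] [s] \<odot> E [s,t,s])))) =
   MS [] [t] \<odot> (LL [s] [] \<odot> E [s,t,s])"
proof -
  have "MS [] [t] \<odot> (LL [s] [] \<odot> (MS [] [t,s] \<odot> (LL [s] [s] \<odot> (HS [s,t] [s] \<odot> E [s,t,s])))) =
        MS [] [t] \<odot> (MS [] [s,t] \<odot> (LL [s,s] [] \<odot> (LL [s] [s] \<odot> (HS [s,t] [s] \<odot> E [s,t,s]))))"
    by (simp add: commR_simp)
  also have "\<dots> = MS [] [t] \<odot> (MS [s] [t] \<odot> (LL [s,s] [] \<odot> (LL [s] [s] \<odot> (HS [s,t] [s] \<odot> E [s,t,s]))))"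
    by (simp add: S.mu_assoc_rl)
  also have "\<dots> = MS [] [t] \<odot> (LL [s] [] \<odot> (MS [s,t] [] \<odot> (HS [s,t] [s] \<odot> E [s,t,s])))"
    using axB[of "[s]" "[]"] by simp
  also have "\<dots> = MS [] [t] \<odot> (LL [s] [] \<odot> E [s,t,s])"
    by (simp add: S.mu_unitL up_rules)
  finally show ?thesis .
qed

lemma lamAbs2_0: "MS [] [t] \<odot> (LL [s] [] \<odot> (HS [s,t] [] \<odot> (MS [] [t] \<odot> (LL [s] [] \<odot> E [s,t,s])))) =
   MS [] [t] \<odot> (LL [s] [] \<odot> E [s,t,s])"
proof -
  have "MS [] [t] \<odot> (LL [s] [] \<odot> (HS [s,t] [] \<odot> (MS [] [t] \<odot> (LL [s] [] \<odot> E [s,t,s])))) =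
        MS [] [t] \<odot> (MS [] [s,t] \<odot> (LL [s,s] [] \<odot> (HS [s,s,t] [] \<odot> (LL [s] [] \<odot> E [s,t,s]))))"
    by (simp add: commR_simp)
  also have "\<dots> = MS [] [t] \<odot> (MS [s] [t] \<odot> (LL [s,s] [] \<odot> (HS [s,s,t] [] \<odot> (LL [s] [] \<odot> E [s,t,s]))))"
    by (simp add: S.mu_assoc_rl)
  also have "\<dots> = MS [] [t] \<odot> (LL [s] [] \<odot> E [s,t,s])"
    using lam_E[of "[s]" "[]"] by simp
  finally show ?thesis .
qed

lemma lamAbs1: "obs u \<Longrightarrow> obs w \<Longrightarrow> cod2 K r = cs (u@[s,t,s]@w) \<Longrightarrow>
  MS u (t#w) \<odot> (LL (u@[s]) w \<odot> (MS u (t#s#w) \<odot> (LL (u@[s]) (s#w) \<odot> (HS (u@[s,t]) (s#w) \<odot> r)))) =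
  MS u (t#w) \<odot> (LL (u@[s]) w \<odot> r)"
  using arg_cong[OF lamAbs1_0, of "\<lambda>X. Wh u X w \<odot> r"] by (simp add: chain_simps E_left)

lemma lamAbs2: "obs u \<Longrightarrow> obs w \<Longrightarrow> cod2 K r = cs (u@[s,t,s]@w) \<Longrightarrow>
  MS u (t#w) \<odot> (LL (u@[s]) w \<odot> (HS (u@[s,t]) w \<odot> (MS u (t#w) \<odot> (LL (u@[s]) w \<odot> r)))) =
  MS u (t#w) \<odot> (LL (u@[s]) w \<odot> r)"
  using arg_cong[OF lamAbs2_0, of "\<lambda>X. Wh u X w \<odot> r"] by (simp add: chain_simps E_left)


abbreviation "GT u w \<equiv> G u t tb w"
abbreviation "GS u w \<equiv> G u s sb w"

lemma P1_0: "MS [] [t] \<odot> (LL [s] [] \<odot> (HS [s,t] [] \<odot> (MT [s] [] \<odot> (LL [] [t] \<odot> E [t,s,t])))) =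
  MT [s] [] \<odot> (LL [] [t] \<odot> (MS [t] [t] \<odot> (LL [t,s] [] \<odot> (HS [t,s,t] [] \<odot> E [t,s,t]))))"
proof -
  have "MS [] [t] \<odot> (LL [s] [] \<odot> (HS [s,t] [] \<odot> (MT [s] [] \<odot> (LL [] [t] \<odot> E [t,s,t])))) =
    MS [] [t] \<odot> (LL [s] [] \<odot> (MT [s] [s] \<odot> (HS [s,t,t] [] \<odot> (LL [] [t] \<odot> E [t,s,t]))))"
    by (simp add: commR_simp)
  also have "\<dots> = MS [] [t] \<odot> (MT [s,s] [] \<odot> (LL [s] [t] \<odot> (LL [s,t] [] \<odot> (HS [s,t,t] [] \<odot> (LL [] [t] \<odot> E [t,s,t])))))"
    using axA[of "[s]" "[]"] by simp
  also have "\<dots> = MT [s] [] \<odot> (MS [] [t,t] \<odot> (LL [s] [t] \<odot> (LL [s,t] [] \<odot> (HS [s,t,t] [] \<odot> (LL [] [t] \<odot> E [t,s,t])))))"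
    by (simp add: comm_simp)
  also have "\<dots> = MT [s] [] \<odot> (MS [] [t,t] \<odot> (LL [s] [t] \<odot> (LL [] [s,t] \<odot> (LL [t,s] [] \<odot> (HS [t,s,t] [] \<odot> E [t,s,t])))))"
    by (simp add: commR_simp)
  also have "\<dots> = MT [s] [] \<odot> (LL [] [t] \<odot> (MS [t] [t] \<odot> (LL [t,s] [] \<odot> (HS [t,s,t] [] \<odot> E [t,s,t]))))"
    using axB[of "[]" "[t]"] by simp
  finally show ?thesis .
qed

lemma P1: "obs u \<Longrightarrow> obs w \<Longrightarrow> cod2 K r = cs (u@[t,s,t]@w) \<Longrightarrow>
  MS u (t#w) \<odot> (LL (u@[s]) w \<odot> (HS (u@[s,t]) w \<odot> (MT (u@[s]) w \<odot> (LL u (t#w) \<odot> r)))) =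
  MT (u@[s]) w \<odot> (LL u (t#w) \<odot> (MS (u@[t]) (t#w) \<odot> (LL (u@[t,s]) w \<odot> (HS (u@[t,s,t]) w \<odot> r))))"
  using arg_cong[OF P1_0, of "\<lambda>X. Wh u X w \<odot> r"] by (simp add: chain_simps E_left)

lemma P2_0: "MS [] [t] \<odot> (LL [s] [] \<odot> (HS [s,t] [] \<odot> (MS [] [t] \<odot> E [s,s,t]))) =
  MS [] [t] \<odot> (MS [s] [t] \<odot> (LL [s,s] [] \<odot> (HS [s,s,t] [] \<odot> E [s,s,t])))"
proof -
  have "MS [] [t] \<odot> (LL [s] [] \<odot> (HS [s,t] [] \<odot> (MS [] [t] \<odot> E [s,s,t]))) =
     MS [] [t] \<odot> (MS [] [s,t] \<odot> (LL [s,s] [] \<odot> (HS [s,s,t] [] \<odot> E [s,s,t])))"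
    by (simp add: commR_simp)
  also have "\<dots> = MS [] [t] \<odot> (MS [s] [t] \<odot> (LL [s,s] [] \<odot> (HS [s,s,t] [] \<odot> E [s,s,t])))"
    by (simp add: S.mu_assoc_rl)
  finally show ?thesis .
qed

lemma P2: "obs u \<Longrightarrow> obs w \<Longrightarrow> cod2 K r = cs (u@[s,s,t]@w) \<Longrightarrow>
  MS u (t#w) \<odot> (LL (u@[s]) w \<odot> (HS (u@[s,t]) w \<odot> (MS u (t#w) \<odot> r))) =
  MS u (t#w) \<odot> (MS (u@[s]) (t#w) \<odot> (LL (u@[s,s]) w \<odot> (HS (u@[s,s,t]) w \<odot> r)))"
  using arg_cong[OF P2_0, of "\<lambda>X. Wh u X w \<odot> r"] by (simp add: chain_simps E_left)

lemma P3_0: "MS [] [t] \<odot> (LL [s] [] \<odot> (HS [s,t] [] \<odot> (HS [] [t] \<odot> E [t]))) =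
  LL [] [] \<odot> (HS [t] [] \<odot> E [t])"
proof -
  have "MS [] [t] \<odot> (LL [s] [] \<odot> (HS [s,t] [] \<odot> (HS [] [t] \<odot> E [t]))) =
     MS [] [t] \<odot> (HS [] [s,t] \<odot> (LL [] [] \<odot> (HS [t] [] \<odot> E [t])))"
    by (simp add: commR_simp)
  also have "\<dots> = LL [] [] \<odot> (HS [t] [] \<odot> E [t])"
    by (simp add: S.mu_unitL down_rules)
  finally show ?thesis .
qed

lemma P3: "obs u \<Longrightarrow> obs w \<Longrightarrow> cod2 K r = cs (u@[t]@w) \<Longrightarrow>
  MS u (t#w) \<odot> (LL (u@[s]) w \<odot> (HS (u@[s,t]) w \<odot> (HS u (t#w) \<odot> r))) =
  LL u w \<odot> (HS (u@[t]) w \<odot> r)"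
  using arg_cong[OF P3_0, of "\<lambda>X. Wh u X w \<odot> r"] by (simp add: chain_simps E_left)

lemma Fi: "MS [] [t] \<odot> (LL [s] [] \<odot> (HS [s,t] [] \<odot> (MT [s] [] \<odot> (LL [] [t] \<odot> (HT [] [s,t] \<odot> E [s,t]))))) =
  MT [s] [] \<odot> (LL [] [t] \<odot> (HT [] [s,t] \<odot> (MS [] [t] \<odot> (LL [s] [] \<odot> (HS [s,t] [] \<odot> E [s,t])))))"
proof -
  have "MS [] [t] \<odot> (LL [s] [] \<odot> (HS [s,t] [] \<odot> (MT [s] [] \<odot> (LL [] [t] \<odot> (HT [] [s,t] \<odot> E [s,t]))))) =
     MT [s] [] \<odot> (LL [] [t] \<odot> (MS [t] [t] \<odot> (LL [t,s] [] \<odot> (HS [t,s,t] [] \<odot> (HT [] [s,t] \<odot> E [s,t])))))"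
    using P1[of "[]" "[]"] by simp
  also have "\<dots> = MT [s] [] \<odot> (LL [] [t] \<odot> (HT [] [s,t] \<odot> (MS [] [t] \<odot> (LL [s] [] \<odot> (HS [s,t] [] \<odot> E [s,t])))))"
    by (simp add: comm_simp)
  finally show ?thesis .
qed

lemma Fii: "MS [] [t] \<odot> (LL [s] [] \<odot> (HS [s,t] [] \<odot> (MT [s] [] \<odot> (LL [] [t] \<odot> (HT [] [s,t] \<odot> E [s,t]))))) =
  MS [] [t] \<odot> (LL [s] [] \<odot> (HS [s,t] [] \<odot> E [s,t]))"
proof -
  have "MS [] [t] \<odot> (LL [s] [] \<odot> (HS [s,t] [] \<odot> (MT [s] [] \<odot> (LL [] [t] \<odot> (HT [] [s,t] \<odot> E [s,t]))))) =
    MS [] [t] \<odot> (LL [s] [] \<odot> (HS [s,t] [] \<odot> (MT [s] [] \<odot> (MS [] [t,t] \<odot> (LL [s] [t] \<odot> (HS [s,t] [t] \<odot> (HT [s] [t] \<odot> E [s,t])))))))"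
    using axC[of "[]" "[t]"] by simp
  also have "\<dots> = MS [] [t] \<odot> (LL [s] [] \<odot> (HS [s,t] [] \<odot> (MS [] [t] \<odot> (MT [s,s] [] \<odot> (LL [s] [t] \<odot> (HS [s,t] [t] \<odot> (HT [s] [t] \<odot> E [s,t])))))))"
    by (simp add: commR_simp)
  also have "\<dots> = MS [] [t] \<odot> (MS [s] [t] \<odot> (LL [s,s] [] \<odot> (HS [s,s,t] [] \<odot> (MT [s,s] [] \<odot> (LL [s] [t] \<odot> (HS [s,t] [t] \<odot> (HT [s] [t] \<odot> E [s,t])))))))"
    using P2[of "[]" "[]"] by simp
  also have "\<dots> = MS [] [t] \<odot> (MT [s,s] [] \<odot> (LL [s] [t] \<odot> (MS [s,t] [t] \<odot> (LL [s,t,s] [] \<odot> (HS [s,t,s,t] [] \<odot> (HS [s,t] [t] \<odot> (HT [s] [t] \<odot> E [s,t])))))))"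
    using P1[of "[s]" "[]"] by simp
  also have "\<dots> = MS [] [t] \<odot> (MT [s,s] [] \<odot> (LL [s] [t] \<odot> (LL [s,t] [] \<odot> (HS [s,t,t] [] \<odot> (HT [s] [t] \<odot> E [s,t])))))"
    using P3[of "[s,t]" "[]"] by simp
  also have "\<dots> = MS [] [t] \<odot> (LL [s] [] \<odot> (MT [s] [s] \<odot> (HS [s,t,t] [] \<odot> (HT [s] [t] \<odot> E [s,t]))))"
    using axA[of "[s]" "[]"] by simp
  also have "\<dots> = MS [] [t] \<odot> (LL [s] [] \<odot> (HS [s,t] [] \<odot> (MT [s] [] \<odot> (HT [s] [t] \<odot> E [s,t]))))"
    by (simp add: comm_simp)
  also have "\<dots> = MS [] [t] \<odot> (LL [s] [] \<odot> (HS [s,t] [] \<odot> E [s,t]))"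
    by (simp add: T.mu_unitL up_rules)
  finally show ?thesis .
qed


definition "lbar = wdl_idem K tb sb mus etas l"
definition "ltil = vcomp K (hcomp K sb mut) (vcomp K (hcomp K l tb) (hcomp K etat (hcomp K sb tb)))"

lemma hom_lbar: "dom2 K lbar = cs [s,t] \<and> cod2 K lbar = cs [s,t]"
  unfolding lbar_def wdl_idem_def n1 hcomp_split2[OF S.hom_mu T.hom_tb] hcomp_split2[OF S.hom_tb hom_l]
  by (simp add: WhFG)

lemma hom_ltil: "dom2 K ltil = cs [s,t] \<and> cod2 K ltil = cs [s,t]"
  unfolding ltil_def n2 hcomp_split2[OF S.hom_tb T.hom_mu] hcomp_split2[OF hom_l T.hom_tb]
  by (simp add: WhFG)

lemma lbarE: "lbar \<odot> E [s,t] = MS [] [t] \<odot> (LL [s] [] \<odot> (HS [s,t] [] \<odot> E [s,t]))"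
  using idem0 unfolding lbar_def .
lemma ltilE: "ltil \<odot> E [s,t] = MT [s] [] \<odot> (LL [] [t] \<odot> (HT [] [s,t] \<odot> E [s,t]))"
  using idem0' unfolding ltil_def .

lemma lbar_E: "lbar \<odot> E [s,t] = lbar" using vcomp_idr[of lbar] hom_lbar by (simp add: E_def)
lemma ltil_E: "ltil \<odot> E [s,t] = ltil" using vcomp_idr[of ltil] hom_ltil by (simp add: E_def)

lemma raw_i: "lbar \<odot> ltil = ltil \<odot> lbar"
proof -
  have "lbar \<odot> ltil = (lbar \<odot> E [s,t]) \<odot> (ltil \<odot> E [s,t])" using lbar_E ltil_E by simp
  also have "\<dots> = MS [] [t] \<odot> (LL [s] [] \<odot> (HS [s,t] [] \<odot> (MT [s] [] \<odot> (LL [] [t] \<odot> (HT [] [s,t] \<odot> E [s,t])))))"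
    unfolding lbarE ltilE by (simp add: vassoc' E_left)
  also have "\<dots> = (ltil \<odot> E [s,t]) \<odot> (lbar \<odot> E [s,t])"
    unfolding lbarE ltilE Fi by (simp add: vassoc' E_left)
  also have "\<dots> = ltil \<odot> lbar" using lbar_E ltil_E by simp
  finally show ?thesis .
qed

lemma raw_ii: "lbar \<odot> ltil = lbar"
proof -
  have "lbar \<odot> ltil = (lbar \<odot> E [s,t]) \<odot> (ltil \<odot> E [s,t])" using lbar_E ltil_E by simp
  also have "\<dots> = MS [] [t] \<odot> (LL [s] [] \<odot> (HS [s,t] [] \<odot> (MT [s] [] \<odot> (LL [] [t] \<odot> (HT [] [s,t] \<odot> E [s,t])))))"
    unfolding lbarE ltilE by (simp add: vassoc' E_left)
  also have "\<dots> = lbar \<odot> E [s,t]" unfolding Fii lbarE ..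
  also have "\<dots> = lbar" using lbar_E by simp
  finally show ?thesis .
qed


lemma lbarW: "obs u \<Longrightarrow> obs w \<Longrightarrow> cod2 K r = cs (u@[s,t]@w) \<Longrightarrow>
  Wh u lbar w \<odot> r = MS u (t#w) \<odot> (LL (u@[s]) w \<odot> (HS (u@[s,t]) w \<odot> r))"
proof -
  assume h: "obs u" "obs w" "cod2 K r = cs (u@[s,t]@w)"
  have "Wh u lbar w \<odot> r = Wh u (lbar \<odot> E [s,t]) w \<odot> r" using lbar_E by simp
  then show ?thesis unfolding lbarE using h by (simp add: chain_simps E_left hom_lbar)
qed

end

context tc begin

lemma cv_E1: "ob x \<Longrightarrow> id2 K x = E [x]" unfolding E_def by (simp add: cs_single)
lemma cv_E2: "ob x \<Longrightarrow> ob y \<Longrightarrow> id2 K (comp1 K x y) = E [x,y]" unfolding E_def by (simp add: cs_two)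
lemma cv_E3: "ob x \<Longrightarrow> ob y \<Longrightarrow> ob z \<Longrightarrow> id2 K (comp1 K x (comp1 K y z)) = E [x,y,z]"
  unfolding E_def using cs_app[of "[x]" "[y,z]"] by (simp add: cs_two cs_single)
lemma cs3: "ob x \<Longrightarrow> ob y \<Longrightarrow> ob z \<Longrightarrow> comp1 K x (comp1 K y z) = cs [x,y,z]"
  using cs_app[of "[x]" "[y,z]"] by (simp add: cs_two cs_single)
lemma cv_h1: "hom g D C \<Longrightarrow> obs w \<Longrightarrow> hcomp K g (E w) = Wh [] g w"
  unfolding Wh_def using hcomp_E_nil_l[OF hom_hcomp[OF _ hom_E]] by simp
lemma cv_h2: "hom g D C \<Longrightarrow> obs u \<Longrightarrow> hcomp K (E u) g = Wh u g []"
  unfolding Wh_def using hcomp_E_nil_r by simp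
lemma cv_h3: "hom g D C \<Longrightarrow> obs u \<Longrightarrow> obs w \<Longrightarrow> hcomp K (hcomp K (E u) g) (E w) = Wh u g w"
  unfolding Wh_def by (rule hassoc[OF hom_E _ hom_E]) auto

lemma dom_Wh[simp]: "src K (dom2 K x) = A \<Longrightarrow> tgt K (dom2 K x) = A \<Longrightarrow> obs u \<Longrightarrow> obs w \<Longrightarrow>
   dom2 K (Wh u x w) = comp1 K (cs u) (comp1 K (dom2 K x) (cs w))"
  unfolding Wh_def E_def by (simp add: hcomp_dom id2_dom comp1_tgt)
lemma cod_Wh[simp]: "src K (dom2 K x) = A \<Longrightarrow> tgt K (dom2 K x) = A \<Longrightarrow> obs u \<Longrightarrow> obs w \<Longrightarrow>
   cod2 K (Wh u x w) = comp1 K (cs u) (comp1 K (cod2 K x) (cs w))"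
  unfolding Wh_def E_def by (simp add: hcomp_dom hcomp_cod id2_dom id2_cod comp1_tgt)

lemma cancelE: "x \<odot> E X = y \<odot> E X \<Longrightarrow> dom2 K x = cs X \<Longrightarrow> dom2 K y = cs X \<Longrightarrow> x = y"
  unfolding E_def by (metis vcomp_idr)

end

locale pair = tc K A + Z: mon K A s0 sb0 mu0 eta0 +
  LP: wdl K A sp sbp mup etap s0 sb0 mu0 eta0 lp + LQ: wdl K A sq sbq muq etaq s0 sb0 mu0 eta0 lq
  for K :: "('o,'m,'c) twocat" and A s0 sb0 mu0 eta0 sp sbp mup etap lp sq sbq muq etaq lq
begin

abbreviation "M0 u w \<equiv> F u [s0,s0] mu0 [s0] w"
abbreviation "H0 u w \<equiv> F u [] eta0 [s0] w"
abbreviation "LPp u w \<equiv> F u [sp,s0] lp [s0,sp] w"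
abbreviation "LQq u w \<equiv> F u [sq,s0] lq [s0,sq] w"

definition "R = rlam K s0 mu0 eta0 sp sq lp lq"

lemma R_chain: "R = M0 [] [sp,sq] \<odot> (LPp [s0] [sq] \<odot> (LQq [s0,sp] [] \<odot> H0 [s0,sp,sq] []))"
  unfolding R_def rlam_def
  by (simp add: cv_E1 cv_E2 cv_E3 cv_h1[OF Z.hom_mu] cv_h2[OF LQ.hom_l] cv_h2[OF Z.hom_eta] cv_h3[OF LP.hom_l] F_def)

lemma R_dom: "dom2 K R = cs [s0,sp,sq] \<and> cod2 K R = cs [s0,sp,sq]"
  unfolding R_chain by simp

lemma XB0: "LPp [] [sq] \<odot> (LQq [sp] [] \<odot> (M0 [sp,sq] [] \<odot> E [sp,sq,s0,s0])) =
  M0 [] [sp,sq] \<odot> (LPp [s0] [sq] \<odot> (LQq [s0,sp] [] \<odot> (LPp [] [sq,s0] \<odot> (LQq [sp] [s0] \<odot> E [sp,sq,s0,s0]))))"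
proof -
  have "LPp [] [sq] \<odot> (LQq [sp] [] \<odot> (M0 [sp,sq] [] \<odot> E [sp,sq,s0,s0])) =
    LPp [] [sq] \<odot> (M0 [sp] [sq] \<odot> (LQq [sp,s0] [] \<odot> (LQq [sp] [s0] \<odot> E [sp,sq,s0,s0])))"
    using LQ.axB[of "[sp]" "[]"] by simp
  also have "\<dots> = M0 [] [sp,sq] \<odot> (LPp [s0] [sq] \<odot> (LPp [] [s0,sq] \<odot> (LQq [sp,s0] [] \<odot> (LQq [sp] [s0] \<odot> E [sp,sq,s0,s0]))))"
    using LP.axB[of "[]" "[sq]"] by simp
  also have "\<dots> = M0 [] [sp,sq] \<odot> (LPp [s0] [sq] \<odot> (LQq [s0,sp] [] \<odot> (LPp [] [sq,s0] \<odot> (LQq [sp] [s0] \<odot> E [sp,sq,s0,s0]))))"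
    by (simp add: commR_simp)
  finally show ?thesis .
qed

lemma XB: "obs u \<Longrightarrow> obs w \<Longrightarrow> cod2 K r = cs (u@[sp,sq,s0,s0]@w) \<Longrightarrow>
  M0 u (sp#sq#w) \<odot> (LPp (u@[s0]) (sq#w) \<odot> (LQq (u@[s0,sp]) w \<odot> (LPp u (sq#s0#w) \<odot> (LQq (u@[sp]) (s0#w) \<odot> r)))) =
  LPp u (sq#w) \<odot> (LQq (u@[sp]) w \<odot> (M0 (u@[sp,sq]) w \<odot> r))"
  using arg_cong[OF XB0, of "\<lambda>X. Wh u X w \<odot> r"] by (simp add: chain_simps E_left)

lemma R_idem_s1: "M0 [] [sp,sq] \<odot> (LPp [s0] [sq] \<odot> (LQq [s0,sp] [] \<odot> (H0 [s0,sp,sq] [] \<odot>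
     (M0 [] [sp,sq] \<odot> (LPp [s0] [sq] \<odot> (LQq [s0,sp] [] \<odot> (H0 [s0,sp,sq] [] \<odot> E [s0,sp,sq])))))))
  = M0 [] [sp,sq] \<odot> (M0 [] [s0,sp,sq] \<odot> (LPp [s0,s0] [sq] \<odot> (LQq [s0,s0,sp] [] \<odot>
     (LPp [s0] [sq,s0] \<odot> (LQq [s0,sp] [s0] \<odot> (H0 [s0,sp,sq] [s0] \<odot> (H0 [s0,sp,sq] [] \<odot> E [s0,sp,sq])))))))"
    by (simp add: commR_simp)


lemma R_idem_s0: "(R \<odot> R) \<odot> E [s0,sp,sq] = M0 [] [sp,sq] \<odot> (LPp [s0] [sq] \<odot> (LQq [s0,sp] [] \<odot> (H0 [s0,sp,sq] [] \<odot>
     (M0 [] [sp,sq] \<odot> (LPp [s0] [sq] \<odot> (LQq [s0,sp] [] \<odot> (H0 [s0,sp,sq] [] \<odot> E [s0,sp,sq])))))))"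
    unfolding R_chain by (simp add: vassoc')

lemma R_idem_s2: "M0 [] [sp,sq] \<odot> (M0 [] [s0,sp,sq] \<odot> (LPp [s0,s0] [sq] \<odot> (LQq [s0,s0,sp] [] \<odot>
     (LPp [s0] [sq,s0] \<odot> (LQq [s0,sp] [s0] \<odot> (H0 [s0,sp,sq] [s0] \<odot> (H0 [s0,sp,sq] [] \<odot> E [s0,sp,sq])))))))
   = M0 [] [sp,sq] \<odot> (M0 [s0] [sp,sq] \<odot> (LPp [s0,s0] [sq] \<odot> (LQq [s0,s0,sp] [] \<odot>
     (LPp [s0] [sq,s0] \<odot> (LQq [s0,sp] [s0] \<odot> (H0 [s0,sp,sq] [s0] \<odot> (H0 [s0,sp,sq] [] \<odot> E [s0,sp,sq])))))))"
    by (simp add: Z.mu_assoc_rl)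

lemma R_idem_s3: "M0 [] [sp,sq] \<odot> (M0 [s0] [sp,sq] \<odot> (LPp [s0,s0] [sq] \<odot> (LQq [s0,s0,sp] [] \<odot>
     (LPp [s0] [sq,s0] \<odot> (LQq [s0,sp] [s0] \<odot> (H0 [s0,sp,sq] [s0] \<odot> (H0 [s0,sp,sq] [] \<odot> E [s0,sp,sq])))))))
   = M0 [] [sp,sq] \<odot> (LPp [s0] [sq] \<odot> (LQq [s0,sp] [] \<odot> (M0 [s0,sp,sq] [] \<odot>
     (H0 [s0,sp,sq] [s0] \<odot> (H0 [s0,sp,sq] [] \<odot> E [s0,sp,sq])))))"
    using XB[of "[s0]" "[]"] by simp

lemma R_idem_s4: "M0 [] [sp,sq] \<odot> (LPp [s0] [sq] \<odot> (LQq [s0,sp] [] \<odot> (M0 [s0,sp,sq] [] \<odot>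
     (H0 [s0,sp,sq] [s0] \<odot> (H0 [s0,sp,sq] [] \<odot> E [s0,sp,sq])))))
   = M0 [] [sp,sq] \<odot> (LPp [s0] [sq] \<odot> (LQq [s0,sp] [] \<odot> (H0 [s0,sp,sq] [] \<odot> E [s0,sp,sq])))"
    by (simp add: Z.mu_unitL up_rules)


lemma R_E: "R \<odot> E [s0,sp,sq] = M0 [] [sp,sq] \<odot> (LPp [s0] [sq] \<odot> (LQq [s0,sp] [] \<odot> (H0 [s0,sp,sq] [] \<odot> E [s0,sp,sq])))"
  unfolding R_chain by (simp add: vassoc')

lemma R_idem: "R \<odot> R = R"
proof -
  have e: "(R \<odot> R) \<odot> E [s0,sp,sq] = R \<odot> E [s0,sp,sq]"
    unfolding R_idem_s0 R_idem_s1 R_idem_s2 R_idem_s3 R_idem_s4 R_E ..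
  have d: "dom2 K (R \<odot> R) = cs [s0,sp,sq]" using R_dom by (simp add: vcomp_dom)
  show ?thesis using cancelE[OF e d] R_dom by blast
qed


lemma bp_conv: "hcomp K (wdl_idem K sbp sb0 mu0 eta0 lp) (id2 K sq) = Wh [] LP.lbar [sq]"
  using cv_h1[of LP.lbar "[s0,sp]" "[s0,sp]" "[sq]"] LP.hom_lbar
  by (simp add: cv_E1 LP.lbar_def hom_def)
lemma bq_conv: "hcomp K (id2 K sp) (wdl_idem K sbq sb0 mu0 eta0 lq) = Wh [sp] LQ.lbar []"
  using cv_h2[of LQ.lbar "[s0,sq]" "[s0,sq]" "[sp]"] LQ.hom_lbar
  by (simp add: cv_E1 LQ.lbar_def hom_def)
lemma lp_conv: "hcomp K lp (id2 K sq) = LPp [] [sq]"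
  using cv_h1[OF LP.hom_l, of "[sq]"] by (simp add: cv_E1 F_def)

lemma p1a: "vcomp K R (hcomp K (wdl_idem K sbp sb0 mu0 eta0 lp) (id2 K sq)) = R"
proof -
  have "(R \<odot> Wh [] LP.lbar [sq]) \<odot> E [s0,sp,sq] = M0 [] [sp,sq] \<odot> (LPp [s0] [sq] \<odot> (LQq [s0,sp] [] \<odot> (H0 [s0,sp,sq] [] \<odot>
     (Wh [] LP.lbar [sq] \<odot> E [s0,sp,sq]))))"
    unfolding R_chain using LP.hom_lbar by (simp add: vassoc')
  also have "\<dots> = M0 [] [sp,sq] \<odot> (LPp [s0] [sq] \<odot> (LQq [s0,sp] [] \<odot> (H0 [s0,sp,sq] [] \<odot>
     (M0 [] [sp,sq] \<odot> (LPp [s0] [sq] \<odot> (H0 [s0,sp] [sq] \<odot> E [s0,sp,sq]))))))"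
    using LP.lbarW[of "[]" "[sq]"] by simp
  also have "\<dots> = M0 [] [sp,sq] \<odot> (LPp [s0] [sq] \<odot> (M0 [] [sp,s0,sq] \<odot> (LPp [s0] [s0,sq] \<odot> (H0 [s0,sp] [s0,sq] \<odot>
     (LQq [s0,sp] [] \<odot> (H0 [s0,sp,sq] [] \<odot> E [s0,sp,sq]))))))"
    by (simp add: commR_simp)
  also have "\<dots> = M0 [] [sp,sq] \<odot> (LPp [s0] [sq] \<odot> (LQq [s0,sp] [] \<odot> (H0 [s0,sp,sq] [] \<odot> E [s0,sp,sq])))"
    using LP.lamAbs1[of "[]" "[sq]"] by simp
  also have "\<dots> = R \<odot> E [s0,sp,sq]" using R_E ..
  finally have e: "(R \<odot> Wh [] LP.lbar [sq]) \<odot> E [s0,sp,sq] = R \<odot> E [s0,sp,sq]" .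
  have d: "dom2 K (R \<odot> Wh [] LP.lbar [sq]) = cs [s0,sp,sq]" using R_dom LP.hom_lbar by (simp add: vcomp_dom)
  show ?thesis unfolding bp_conv using cancelE[OF e d] R_dom by blast
qed

lemma p1b: "R = vcomp K (hcomp K (wdl_idem K sbp sb0 mu0 eta0 lp) (id2 K sq)) R"
proof -
  have "(Wh [] LP.lbar [sq] \<odot> R) \<odot> E [s0,sp,sq] = Wh [] LP.lbar [sq] \<odot> (M0 [] [sp,sq] \<odot> (LPp [s0] [sq] \<odot> (LQq [s0,sp] [] \<odot> (H0 [s0,sp,sq] [] \<odot>
     E [s0,sp,sq]))))"
    unfolding R_chain using LP.hom_lbar by (simp add: vassoc')
  also have "\<dots> = M0 [] [sp,sq] \<odot> (LPp [s0] [sq] \<odot> (H0 [s0,sp] [sq] \<odot> (M0 [] [sp,sq] \<odot> (LPp [s0] [sq] \<odot> (LQq [s0,sp] [] \<odot> (H0 [s0,sp,sq] [] \<odot>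
     E [s0,sp,sq]))))))"
    using LP.lbarW[of "[]" "[sq]"] by simp
  also have "\<dots> = M0 [] [sp,sq] \<odot> (LPp [s0] [sq] \<odot> (LQq [s0,sp] [] \<odot> (H0 [s0,sp,sq] [] \<odot> E [s0,sp,sq])))"
    using LP.lamAbs2[of "[]" "[sq]"] by simp
  also have "\<dots> = R \<odot> E [s0,sp,sq]" using R_E ..
  finally have e: "(Wh [] LP.lbar [sq] \<odot> R) \<odot> E [s0,sp,sq] = R \<odot> E [s0,sp,sq]" .
  have d: "dom2 K (Wh [] LP.lbar [sq] \<odot> R) = cs [s0,sp,sq]" using R_dom LP.hom_lbar by (simp add: vcomp_dom)
  show ?thesis unfolding bp_conv using cancelE[OF e d] R_dom by metis
qed

lemma p3: "vcomp K R (hcomp K lp (id2 K sq)) = vcomp K (hcomp K lp (id2 K sq)) (hcomp K (id2 K sp) (wdl_idem K sbq sb0 mu0 eta0 lq))"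
proof -
  have "(R \<odot> LPp [] [sq]) \<odot> E [sp,s0,sq] = M0 [] [sp,sq] \<odot> (LPp [s0] [sq] \<odot> (LQq [s0,sp] [] \<odot> (H0 [s0,sp,sq] [] \<odot>
     (LPp [] [sq] \<odot> E [sp,s0,sq]))))"
    unfolding R_chain by (simp add: vassoc')
  also have "\<dots> = M0 [] [sp,sq] \<odot> (LPp [s0] [sq] \<odot> (LPp [] [s0,sq] \<odot> (LQq [sp,s0] [] \<odot> (H0 [sp,s0,sq] [] \<odot> E [sp,s0,sq]))))"
    by (simp add: commR_simp)
  also have "\<dots> = LPp [] [sq] \<odot> (M0 [sp] [sq] \<odot> (LQq [sp,s0] [] \<odot> (H0 [sp,s0,sq] [] \<odot> E [sp,s0,sq])))"
    using LP.axB[of "[]" "[sq]"] by simp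
  also have "\<dots> = LPp [] [sq] \<odot> (Wh [sp] LQ.lbar [] \<odot> E [sp,s0,sq])"
    using LQ.lbarW[of "[sp]" "[]"] by simp
  also have "\<dots> = (LPp [] [sq] \<odot> Wh [sp] LQ.lbar []) \<odot> E [sp,s0,sq]"
    using LQ.hom_lbar by (simp add: vassoc')
  finally have e: "(R \<odot> LPp [] [sq]) \<odot> E [sp,s0,sq] = (LPp [] [sq] \<odot> Wh [sp] LQ.lbar []) \<odot> E [sp,s0,sq]" .
  have d: "dom2 K (R \<odot> LPp [] [sq]) = cs [sp,s0,sq]" "dom2 K (LPp [] [sq] \<odot> Wh [sp] LQ.lbar []) = cs [sp,s0,sq]"
    using R_dom LQ.hom_lbar by (simp_all add: vcomp_dom)
  show ?thesis unfolding bq_conv lp_conv using cancelE[OF e d] by blast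
qed


lemma hom_lbar': "hom LP.lbar [s0,sp] [s0,sp]" using LP.hom_lbar by (simp add: hom_def)

lemma R_idem2: "idem_2cell K (comp1 K s0 (comp1 K sp sq)) R"
  unfolding idem_2cell_def using R_dom R_idem by (simp add: cs3)

end

locale W3 = tc K A + Z: mon K A s0 sb0 mu0 eta0 + O: mon K A s1 sb1 mu1 eta1 + T: mon K A s2 sb2 mu2 eta2 +
  L01: wdl K A s1 sb1 mu1 eta1 s0 sb0 mu0 eta0 l01 +
  L02: wdl K A s2 sb2 mu2 eta2 s0 sb0 mu0 eta0 l02 +
  L12: wdl K A s2 sb2 mu2 eta2 s1 sb1 mu1 eta1 l12
  for K :: "('o,'m,'c) twocat" and A s0 sb0 mu0 eta0 s1 sb1 mu1 eta1 s2 sb2 mu2 eta2 l01 l02 l12 +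
  assumes YB: "vcomp K (hcomp K l01 sb2) (vcomp K (hcomp K sb1 l02) (hcomp K l12 sb0)) =
     vcomp K (hcomp K sb0 l12) (vcomp K (hcomp K l02 sb1) (hcomp K sb2 l01))"
begin

sublocale P12: pair K A s0 sb0 mu0 eta0 s1 sb1 mu1 eta1 l01 s2 sb2 mu2 eta2 l02 by intro_locales
sublocale P21: pair K A s0 sb0 mu0 eta0 s2 sb2 mu2 eta2 l02 s1 sb1 mu1 eta1 l01 by intro_locales

abbreviation "M0 u w \<equiv> F u [s0,s0] mu0 [s0] w"
abbreviation "H0 u w \<equiv> F u [] eta0 [s0] w"
abbreviation "M2 u w \<equiv> F u [s2,s2] mu2 [s2] w"
abbreviation "H2 u w \<equiv> F u [] eta2 [s2] w"
abbreviation "La u w \<equiv> F u [s1,s0] l01 [s0,s1] w"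
abbreviation "Lb u w \<equiv> F u [s2,s0] l02 [s0,s2] w"
abbreviation "Lc u w \<equiv> F u [s2,s1] l12 [s1,s2] w"

lemmas WhFG3 = F_def[of _ "[s1,s0]" l01 "[s0,s1]", symmetric] F_def[of _ "[s2,s0]" l02 "[s0,s2]", symmetric]
  F_def[of _ "[s2,s1]" l12 "[s1,s2]", symmetric]
  G_def[of _ s0 sb0, symmetric] G_def[of _ s1 sb1, symmetric] G_def[of _ s2 sb2, symmetric]

lemma YB0: "La [] [s2] \<odot> (Lb [s1] [] \<odot> (Lc [] [s0] \<odot> E [s2,s1,s0])) =
  Lc [s0] [] \<odot> (Lb [] [s1] \<odot> (La [s2] [] \<odot> E [s2,s1,s0]))"
proof -
  have "(vcomp K (hcomp K l01 sb2) (vcomp K (hcomp K sb1 l02) (hcomp K l12 sb0))) \<odot> E [s2,s1,s0] =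
     (vcomp K (hcomp K sb0 l12) (vcomp K (hcomp K l02 sb1) (hcomp K sb2 l01))) \<odot> E [s2,s1,s0]"
    using YB by simp
  then show ?thesis
    unfolding hcomp_split1[OF L01.hom_l T.hom_tb] hcomp_split2[OF O.hom_tb L02.hom_l] hcomp_split1[OF L12.hom_l Z.hom_tb]
      hcomp_split2[OF Z.hom_tb L12.hom_l] hcomp_split1[OF L02.hom_l O.hom_tb] hcomp_split2[OF T.hom_tb L01.hom_l]
    by (simp add: WhFG3 chain_simps; (simp add: up_rules)?; (simp add: down_rules)?)
qed

lemma YBr: "obs u \<Longrightarrow> obs w \<Longrightarrow> cod2 K r = cs (u@[s2,s1,s0]@w) \<Longrightarrow>
  La u (s2#w) \<odot> (Lb (u@[s1]) w \<odot> (Lc u (s0#w) \<odot> r)) = Lc (u@[s0]) w \<odot> (Lb u (s1#w) \<odot> (La (u@[s2]) w \<odot> r))"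
  using arg_cong[OF YB0, of "\<lambda>X. Wh u X w \<odot> r"] by (simp add: chain_simps E_left)

lemma W3_2: "vcomp K P12.R (hcomp K (id2 K s0) l12) = vcomp K (hcomp K (id2 K s0) l12) P21.R"
proof -
  have c: "hcomp K (id2 K s0) l12 = Lc [s0] []" using cv_h2[OF L12.hom_l, of "[s0]"] by (simp add: cv_E1 F_def)
  have "(P12.R \<odot> Lc [s0] []) \<odot> E [s0,s2,s1] = M0 [] [s1,s2] \<odot> (La [s0] [s2] \<odot> (Lb [s0,s1] [] \<odot> (H0 [s0,s1,s2] [] \<odot>
     (Lc [s0] [] \<odot> E [s0,s2,s1]))))"
    unfolding P12.R_chain by (simp add: vassoc')
  also have "\<dots> = M0 [] [s1,s2] \<odot> (La [s0] [s2] \<odot> (Lb [s0,s1] [] \<odot> (Lc [s0] [s0] \<odot> (H0 [s0,s2,s1] [] \<odot> E [s0,s2,s1]))))"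
    by (simp add: commR_simp)
  also have "\<dots> = M0 [] [s1,s2] \<odot> (Lc [s0,s0] [] \<odot> (Lb [s0] [s1] \<odot> (La [s0,s2] [] \<odot> (H0 [s0,s2,s1] [] \<odot> E [s0,s2,s1]))))"
    using YBr[of "[s0]" "[]"] by simp
  also have "\<dots> = Lc [s0] [] \<odot> (M0 [] [s2,s1] \<odot> (Lb [s0] [s1] \<odot> (La [s0,s2] [] \<odot> (H0 [s0,s2,s1] [] \<odot> E [s0,s2,s1]))))"
    by (simp add: commR_simp)
  also have "\<dots> = (Lc [s0] [] \<odot> P21.R) \<odot> E [s0,s2,s1]"
    unfolding P21.R_chain by (simp add: vassoc')
  finally have e: "(P12.R \<odot> Lc [s0] []) \<odot> E [s0,s2,s1] = (Lc [s0] [] \<odot> P21.R) \<odot> E [s0,s2,s1]" .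
  have d: "dom2 K (P12.R \<odot> Lc [s0] []) = cs [s0,s2,s1]" "dom2 K (Lc [s0] [] \<odot> P21.R) = cs [s0,s2,s1]"
    using P12.R_dom P21.R_dom by (simp_all add: vcomp_dom)
  show ?thesis unfolding c using cancelE[OF e d] by blast
qed


definition "Lr = llam K s0 s1 s2 mu2 eta2 l02 l12"

lemma Lr_chain: "Lr = M2 [s0,s1] [] \<odot> (Lc [s0] [s2] \<odot> (Lb [] [s1,s2] \<odot> H2 [] [s0,s1,s2]))"
  unfolding Lr_def llam_def
  by (simp add: cv_E1 cv_E2 cv_E3 cv_h2[OF T.hom_mu] cv_h1[OF L02.hom_l] cv_h1[OF T.hom_eta] cv_h3[OF L12.hom_l] F_def)

lemma Lr_dom: "dom2 K Lr = cs [s0,s1,s2] \<and> cod2 K Lr = cs [s0,s1,s2]"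
  unfolding Lr_chain by simp

lemma XX0: "M2 [s0] [] \<odot> (Lb [] [s2] \<odot> (H0 [s2] [s2] \<odot> E [s2,s2])) = Lb [] [] \<odot> (M2 [] [s0] \<odot> (H0 [s2,s2] [] \<odot> E [s2,s2]))"
proof -
  have "Lb [] [] \<odot> (M2 [] [s0] \<odot> (H0 [s2,s2] [] \<odot> E [s2,s2])) = Lb [] [] \<odot> (H0 [s2] [] \<odot> (M2 [] [] \<odot> E [s2,s2]))"
    by (simp add: comm_simp)
  also have "\<dots> = M2 [s0] [] \<odot> (Lb [] [s2] \<odot> (H2 [] [s0,s2] \<odot> (H0 [] [s2] \<odot> (M2 [] [] \<odot> E [s2,s2]))))"
    using L02.axD[of "[]" "[]"] by simp
  also have "\<dots> = M2 [s0] [] \<odot> (M2 [s0,s2] [] \<odot> (Lb [] [s2,s2] \<odot> (H2 [] [s0,s2,s2] \<odot> (H0 [] [s2,s2] \<odot> E [s2,s2]))))"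
    by (simp add: comm_simp)
  also have "\<dots> = M2 [s0] [] \<odot> (M2 [s0] [s2] \<odot> (Lb [] [s2,s2] \<odot> (H2 [] [s0,s2,s2] \<odot> (H0 [] [s2,s2] \<odot> E [s2,s2]))))"
    by (simp add: T.mu_assoc_lr)
  also have "\<dots> = M2 [s0] [] \<odot> (Lb [] [s2] \<odot> (H0 [s2] [s2] \<odot> E [s2,s2]))"
    using L02.axD[of "[]" "[s2]"] by simp
  finally show ?thesis ..
qed

lemma XXr: "obs u \<Longrightarrow> obs w \<Longrightarrow> cod2 K r = cs (u@[s2,s2]@w) \<Longrightarrow>
  M2 (u@[s0]) w \<odot> (Lb u (s2#w) \<odot> (H0 (u@[s2]) (s2#w) \<odot> r)) = Lb u w \<odot> (M2 u (s0#w) \<odot> (H0 (u@[s2,s2]) w \<odot> r))"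
  using arg_cong[OF XX0, of "\<lambda>X. Wh u X w \<odot> r"] by (simp add: chain_simps E_left)

abbreviation "N2 \<equiv> M0 [] [s1,s2] \<odot> (La [s0] [s2] \<odot> (Lb [s0,s1] [] \<odot> (M2 [s0,s1] [s0] \<odot> (H0 [s0,s1,s2,s2] [] \<odot>
   (Lc [s0] [s2] \<odot> (Lb [] [s1,s2] \<odot> (H2 [] [s0,s1,s2] \<odot> E [s0,s1,s2])))))))"

lemma LR_N2: "(Lr \<odot> P12.R) \<odot> E [s0,s1,s2] = N2"
proof -
  have "(Lr \<odot> P12.R) \<odot> E [s0,s1,s2] = M2 [s0,s1] [] \<odot> (Lc [s0] [s2] \<odot> (Lb [] [s1,s2] \<odot> (H2 [] [s0,s1,s2] \<odot>
     (M0 [] [s1,s2] \<odot> (La [s0] [s2] \<odot> (Lb [s0,s1] [] \<odot> (H0 [s0,s1,s2] [] \<odot> E [s0,s1,s2])))))))"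
    unfolding Lr_chain P12.R_chain by (simp add: vassoc')
  also have "\<dots> = M2 [s0,s1] [] \<odot> (Lc [s0] [s2] \<odot> (Lb [] [s1,s2] \<odot> (M0 [s2] [s1,s2] \<odot> (La [s2,s0] [s2] \<odot>
     (Lb [s2,s0,s1] [] \<odot> (H0 [s2,s0,s1,s2] [] \<odot> (H2 [] [s0,s1,s2] \<odot> E [s0,s1,s2])))))))"
    by (simp add: comm_simp)
  also have "\<dots> = M2 [s0,s1] [] \<odot> (Lc [s0] [s2] \<odot> (M0 [] [s2,s1,s2] \<odot> (Lb [s0] [s1,s2] \<odot> (Lb [] [s0,s1,s2] \<odot> (La [s2,s0] [s2] \<odot>
     (Lb [s2,s0,s1] [] \<odot> (H0 [s2,s0,s1,s2] [] \<odot> (H2 [] [s0,s1,s2] \<odot> E [s0,s1,s2]))))))))"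
    using L02.axB[of "[]" "[s1,s2]"] by simp
  also have "\<dots> = M2 [s0,s1] [] \<odot> (M0 [] [s1,s2,s2] \<odot> (Lc [s0,s0] [s2] \<odot> (Lb [s0] [s1,s2] \<odot> (Lb [] [s0,s1,s2] \<odot> (La [s2,s0] [s2] \<odot>
     (Lb [s2,s0,s1] [] \<odot> (H0 [s2,s0,s1,s2] [] \<odot> (H2 [] [s0,s1,s2] \<odot> E [s0,s1,s2]))))))))"
    by (simp add: commR_simp)
  also have "\<dots> = M2 [s0,s1] [] \<odot> (M0 [] [s1,s2,s2] \<odot> (Lc [s0,s0] [s2] \<odot> (Lb [s0] [s1,s2] \<odot> (La [s0,s2] [s2] \<odot>
     (Lb [s0,s2,s1] [] \<odot> (H0 [s0,s2,s1,s2] [] \<odot> (Lb [] [s1,s2] \<odot> (H2 [] [s0,s1,s2] \<odot> E [s0,s1,s2]))))))))"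
    by (simp add: comm_simp)
  also have "\<dots> = M2 [s0,s1] [] \<odot> (M0 [] [s1,s2,s2] \<odot> (La [s0] [s2,s2] \<odot> (Lb [s0,s1] [s2] \<odot> (Lc [s0] [s0,s2] \<odot>
     (Lb [s0,s2,s1] [] \<odot> (H0 [s0,s2,s1,s2] [] \<odot> (Lb [] [s1,s2] \<odot> (H2 [] [s0,s1,s2] \<odot> E [s0,s1,s2]))))))))"
    using YBr[of "[s0]" "[s2]"] by simp
  also have "\<dots> = M2 [s0,s1] [] \<odot> (M0 [] [s1,s2,s2] \<odot> (La [s0] [s2,s2] \<odot> (Lb [s0,s1] [s2] \<odot> (Lb [s0,s1,s2] [] \<odot>
     (H0 [s0,s1,s2,s2] [] \<odot> (Lc [s0] [s2] \<odot> (Lb [] [s1,s2] \<odot> (H2 [] [s0,s1,s2] \<odot> E [s0,s1,s2]))))))))"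
    by (simp add: comm_simp)
  also have "\<dots> = M0 [] [s1,s2] \<odot> (La [s0] [s2] \<odot> (M2 [s0,s1,s0] [] \<odot> (Lb [s0,s1] [s2] \<odot> (Lb [s0,s1,s2] [] \<odot>
     (H0 [s0,s1,s2,s2] [] \<odot> (Lc [s0] [s2] \<odot> (Lb [] [s1,s2] \<odot> (H2 [] [s0,s1,s2] \<odot> E [s0,s1,s2]))))))))"
    by (simp add: commR_simp)
  also have "\<dots> = N2"
    using L02.axA[of "[s0,s1]" "[]"] by simp
  finally show ?thesis .
qed


lemma LB_N2: "(Lr \<odot> Wh [] L01.lbar [s2]) \<odot> E [s0,s1,s2] = N2"
proof -
  have "(Lr \<odot> Wh [] L01.lbar [s2]) \<odot> E [s0,s1,s2] = M2 [s0,s1] [] \<odot> (Lc [s0] [s2] \<odot> (Lb [] [s1,s2] \<odot> (H2 [] [s0,s1,s2] \<odot>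
     (Wh [] L01.lbar [s2] \<odot> E [s0,s1,s2]))))"
    unfolding Lr_chain using L01.hom_lbar by (simp add: vassoc')
  also have "\<dots> = M2 [s0,s1] [] \<odot> (Lc [s0] [s2] \<odot> (Lb [] [s1,s2] \<odot> (H2 [] [s0,s1,s2] \<odot>
     (M0 [] [s1,s2] \<odot> (La [s0] [s2] \<odot> (H0 [s0,s1] [s2] \<odot> E [s0,s1,s2]))))))"
    using L01.lbarW[of "[]" "[s2]"] by simp
  also have "\<dots> = M2 [s0,s1] [] \<odot> (Lc [s0] [s2] \<odot> (Lb [] [s1,s2] \<odot> (M0 [s2] [s1,s2] \<odot> (La [s2,s0] [s2] \<odot>
     (H0 [s2,s0,s1] [s2] \<odot> (H2 [] [s0,s1,s2] \<odot> E [s0,s1,s2]))))))"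
    by (simp add: comm_simp)
  also have "\<dots> = M2 [s0,s1] [] \<odot> (Lc [s0] [s2] \<odot> (M0 [] [s2,s1,s2] \<odot> (Lb [s0] [s1,s2] \<odot> (Lb [] [s0,s1,s2] \<odot> (La [s2,s0] [s2] \<odot>
     (H0 [s2,s0,s1] [s2] \<odot> (H2 [] [s0,s1,s2] \<odot> E [s0,s1,s2])))))))"
    using L02.axB[of "[]" "[s1,s2]"] by simp
  also have "\<dots> = M2 [s0,s1] [] \<odot> (M0 [] [s1,s2,s2] \<odot> (Lc [s0,s0] [s2] \<odot> (Lb [s0] [s1,s2] \<odot> (Lb [] [s0,s1,s2] \<odot> (La [s2,s0] [s2] \<odot>
     (H0 [s2,s0,s1] [s2] \<odot> (H2 [] [s0,s1,s2] \<odot> E [s0,s1,s2])))))))"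
    by (simp add: commR_simp)
  also have "\<dots> = M2 [s0,s1] [] \<odot> (M0 [] [s1,s2,s2] \<odot> (Lc [s0,s0] [s2] \<odot> (Lb [s0] [s1,s2] \<odot> (La [s0,s2] [s2] \<odot>
     (H0 [s0,s2,s1] [s2] \<odot> (Lb [] [s1,s2] \<odot> (H2 [] [s0,s1,s2] \<odot> E [s0,s1,s2])))))))"
    by (simp add: comm_simp)
  also have "\<dots> = M2 [s0,s1] [] \<odot> (M0 [] [s1,s2,s2] \<odot> (La [s0] [s2,s2] \<odot> (Lb [s0,s1] [s2] \<odot> (Lc [s0] [s0,s2] \<odot>
     (H0 [s0,s2,s1] [s2] \<odot> (Lb [] [s1,s2] \<odot> (H2 [] [s0,s1,s2] \<odot> E [s0,s1,s2])))))))"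
    using YBr[of "[s0]" "[s2]"] by simp
  also have "\<dots> = M2 [s0,s1] [] \<odot> (M0 [] [s1,s2,s2] \<odot> (La [s0] [s2,s2] \<odot> (Lb [s0,s1] [s2] \<odot>
     (H0 [s0,s1,s2] [s2] \<odot> (Lc [s0] [s2] \<odot> (Lb [] [s1,s2] \<odot> (H2 [] [s0,s1,s2] \<odot> E [s0,s1,s2])))))))"
    by (simp add: comm_simp)
  also have "\<dots> = M0 [] [s1,s2] \<odot> (La [s0] [s2] \<odot> (M2 [s0,s1,s0] [] \<odot> (Lb [s0,s1] [s2] \<odot>
     (H0 [s0,s1,s2] [s2] \<odot> (Lc [s0] [s2] \<odot> (Lb [] [s1,s2] \<odot> (H2 [] [s0,s1,s2] \<odot> E [s0,s1,s2])))))))"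
    by (simp add: commR_simp)
  also have "\<dots> = N2"
    using XXr[of "[s0,s1]" "[]"] by simp
  finally show ?thesis .
qed

lemma RL_N2: "(P12.R \<odot> Lr) \<odot> E [s0,s1,s2] = N2"
proof -
  have "(P12.R \<odot> Lr) \<odot> E [s0,s1,s2] = M0 [] [s1,s2] \<odot> (La [s0] [s2] \<odot> (Lb [s0,s1] [] \<odot> (H0 [s0,s1,s2] [] \<odot>
     (M2 [s0,s1] [] \<odot> (Lc [s0] [s2] \<odot> (Lb [] [s1,s2] \<odot> (H2 [] [s0,s1,s2] \<odot> E [s0,s1,s2])))))))"
    unfolding Lr_chain P12.R_chain by (simp add: vassoc')
  also have "\<dots> = N2" by (simp add: commR_simp)
  finally show ?thesis .
qed

lemma W3_A: "vcomp K Lr P12.R = vcomp K Lr (hcomp K (wdl_idem K sb1 sb0 mu0 eta0 l01) (id2 K s2))"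
proof -
  have e: "(Lr \<odot> P12.R) \<odot> E [s0,s1,s2] = (Lr \<odot> Wh [] L01.lbar [s2]) \<odot> E [s0,s1,s2]" using LR_N2 LB_N2 by simp
  have d: "dom2 K (Lr \<odot> P12.R) = cs [s0,s1,s2]" "dom2 K (Lr \<odot> Wh [] L01.lbar [s2]) = cs [s0,s1,s2]"
    using Lr_dom P12.R_dom L01.hom_lbar by (simp_all add: vcomp_dom)
  show ?thesis unfolding P12.bp_conv using cancelE[OF e d] by blast
qed

lemma W3_C: "vcomp K Lr P12.R = vcomp K P12.R Lr"
proof -
  have e: "(Lr \<odot> P12.R) \<odot> E [s0,s1,s2] = (P12.R \<odot> Lr) \<odot> E [s0,s1,s2]" using LR_N2 RL_N2 by simp
  have d: "dom2 K (Lr \<odot> P12.R) = cs [s0,s1,s2]" "dom2 K (P12.R \<odot> Lr) = cs [s0,s1,s2]"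
    using Lr_dom P12.R_dom by (simp_all add: vcomp_dom)
  show ?thesis using cancelE[OF e d] by blast
qed

end



definition revK :: "('o,'m,'c) twocat \<Rightarrow> ('o,'m,'c) twocat" where
  "revK K = \<lparr>src = tgt K, tgt = src K, comp1 = (\<lambda>u w. comp1 K w u), id1 = id1 K, dom2 = dom2 K, cod2 = cod2 K,
     vcomp = vcomp K, hcomp = (\<lambda>a b. hcomp K b a), id2 = id2 K\<rparr>"

lemma revK_simps[simp]: "src (revK K) = tgt K" "tgt (revK K) = src K" "comp1 (revK K) = (\<lambda>u w. comp1 K w u)"
  "id1 (revK K) = id1 K" "dom2 (revK K) = dom2 K" "cod2 (revK K) = cod2 K" "vcomp (revK K) = vcomp K"
  "hcomp (revK K) = (\<lambda>a b. hcomp K b a)" "id2 (revK K) = id2 K"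
  by (simp_all add: revK_def)

lemma two_category_rev: assumes "two_category K" shows "two_category (revK K)"
proof -
  interpret two_category K by fact
  show ?thesis
    apply unfold_locales
    apply (simp_all only: revK_simps)
                        apply (simp_all add: id1_src id1_tgt comp1_src comp1_tgt id2_dom id2_cod
       vcomp_dom vcomp_cod vcomp_assoc vcomp_idl vcomp_idr hcomp_id2 par_src par_tgt)
    subgoal by (metis comp1_assoc)
    subgoal by (metis comp1_idr)
    subgoal by (metis comp1_idl)
    subgoal by (metis hcomp_dom par_src par_tgt)
    subgoal by (metis hcomp_cod par_src par_tgt)
    subgoal by (metis hcomp_assoc par_src par_tgt)
    subgoal by (metis hcomp_idr par_src par_tgt)
    subgoal by (metis hcomp_idl par_src par_tgt)
    subgoal by (metis interchange par_src par_tgt)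
    done
qed


lemma cl_monad_rev: "cl_monad K A t tb mu eta \<Longrightarrow> cl_monad (revK K) A t tb mu eta"
  unfolding cl_monad_def idem_2cell_def cl_2cell_def by auto

lemma cl_wdl_rev: "cl_wdl K A t tb mut etat s sb mus etas l \<Longrightarrow> cl_wdl (revK K) A s sb mus etas t tb mut etat l"
  unfolding cl_wdl_def using cl_monad_rev unfolding cl_2cell_def by auto

lemma wdl_I: "two_category K \<Longrightarrow> cl_wdl K A t tb mut etat s sb mus etas l \<Longrightarrow> wdl K A t tb mut etat s sb mus etas l"
  unfolding wdl_def wdl_axioms_def mon_def mon_axioms_def tc_def by (auto simp: cl_wdl_def)

lemma wdl2_rev: "wdl2_cell K A s0 sb0 mu0 eta0 s1 sb1 mu1 eta1 s2 sb2 mu2 eta2 l01 l02 l12 \<Longrightarrow>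
  wdl2_cell (revK K) A s2 sb2 mu2 eta2 s1 sb1 mu1 eta1 s0 sb0 mu0 eta0 l12 l02 l01"
  unfolding wdl2_cell_def using cl_wdl_rev by auto

lemma W3_I: "two_category K \<Longrightarrow> wdl2_cell K A s0 sb0 mu0 eta0 s1 sb1 mu1 eta1 s2 sb2 mu2 eta2 l01 l02 l12 \<Longrightarrow>
   W3 K A s0 sb0 mu0 eta0 s1 sb1 mu1 eta1 s2 sb2 mu2 eta2 l01 l02 l12"
proof -
  assume a: "two_category K" "wdl2_cell K A s0 sb0 mu0 eta0 s1 sb1 mu1 eta1 s2 sb2 mu2 eta2 l01 l02 l12"
  have w: "wdl K A s1 sb1 mu1 eta1 s0 sb0 mu0 eta0 l01" "wdl K A s2 sb2 mu2 eta2 s0 sb0 mu0 eta0 l02"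
     "wdl K A s2 sb2 mu2 eta2 s1 sb1 mu1 eta1 l12"
    using a wdl_I unfolding wdl2_cell_def by auto
  show ?thesis using w a(2) unfolding W3_def W3_axioms_def wdl2_cell_def wdl_def mon_def tc_def by auto
qed

lemma wdl_F: assumes "two_category K" "cl_wdl K A t tb mut etat s sb mus etas l"
  shows "wdl_idem K tb sb mus etas l = vcomp K (hcomp K sb mut) (vcomp K (hcomp K l tb) (hcomp K etat (hcomp K sb tb)))"
proof -
  interpret w: wdl K A t tb mut etat s sb mus etas l by (rule wdl_I[OF assms])
  interpret r: wdl "revK K" A s sb mus etas t tb mut etat l
    by (rule wdl_I[OF two_category_rev[OF assms(1)] cl_wdl_rev[OF assms(2)]])
  have 1: "r.lbar = w.ltil" by (simp add: r.lbar_def w.ltil_def wdl_idem_def)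
  have 2: "r.ltil = w.lbar" by (simp add: r.ltil_def w.lbar_def wdl_idem_def)
  have "w.lbar = vcomp K w.lbar w.ltil" using w.raw_ii by simp
  also have "\<dots> = vcomp K w.ltil w.lbar" using w.raw_i .
  also have "\<dots> = w.ltil" using r.raw_ii unfolding 1 2 by simp
  finally show ?thesis unfolding w.lbar_def w.ltil_def .
qed

lemma idem_rev: "wdl_idem (revK K) sb tb mut etat l = vcomp K (hcomp K sb mut) (vcomp K (hcomp K l tb) (hcomp K etat (hcomp K sb tb)))"
  by (simp add: wdl_idem_def)

context tc begin
lemma rlam_rev: "ob sk \<Longrightarrow> ob sl \<Longrightarrow> ob s \<Longrightarrow> hom ll [s,sl] [sl,s] \<Longrightarrow>
  rlam (revK K) s mu eta sl sk ll lk = llam K sk sl s mu eta lk ll"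
  unfolding rlam_def llam_def revK_simps
  using hassoc[OF hom_E[of "[sk]"] _ hom_E[of "[s]"], of ll "[s,sl]" "[sl,s]"]
  by (simp add: cv_E1 comp1_assoc ob_def)
end


lemma revK_revK: "revK (revK K) = K" by (simp add: revK_def)

lemma idem_2cell_rev: "idem_2cell (revK K) x e = idem_2cell K x e" by (simp add: idem_2cell_def)

theorem lemma2p2:
  fixes K :: "('o,'m,'c) twocat" and A :: 'o
    and s0 s1 s2 :: 'm
    and sb0 sb1 sb2 mu0 mu1 mu2 eta0 eta1 eta2 l01 l02 l12 :: 'c
  assumes "two_category K"
    and "wdl2_cell K A s0 sb0 mu0 eta0 s1 sb1 mu1 eta1 s2 sb2 mu2 eta2 l01 l02 l12"
  defines "b01 \<equiv> wdl_idem K sb1 sb0 mu0 eta0 l01"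
    and "b02 \<equiv> wdl_idem K sb2 sb0 mu0 eta0 l02"
    and "b12 \<equiv> wdl_idem K sb2 sb1 mu1 eta1 l12"
    and "R012 \<equiv> rlam K s0 mu0 eta0 s1 s2 l01 l02"
    and "R021 \<equiv> rlam K s0 mu0 eta0 s2 s1 l02 l01"
    and "L012 \<equiv> llam K s0 s1 s2 mu2 eta2 l02 l12"
    and "L102 \<equiv> llam K s1 s0 s2 mu2 eta2 l12 l02"
  shows
    \<comment> \<open>idempotence in K\<close>
    "idem_2cell K (comp1 K s0 (comp1 K s1 s2)) R012 \<and>
     idem_2cell K (comp1 K s0 (comp1 K s2 s1)) R021 \<and>
     idem_2cell K (comp1 K s0 (comp1 K s1 s2)) L012 \<and>
     idem_2cell K (comp1 K s1 (comp1 K s0 s2)) L102 \<and>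
    \<comment> \<open>(1)\<close>
     vcomp K R012 (hcomp K b01 (id2 K s2)) = R012 \<and>
     R012 = vcomp K (hcomp K b01 (id2 K s2)) R012 \<and>
     vcomp K R021 (hcomp K b02 (id2 K s1)) = R021 \<and>
     R021 = vcomp K (hcomp K b02 (id2 K s1)) R021 \<and>
    \<comment> \<open>(2)\<close>
     vcomp K R012 (hcomp K (id2 K s0) l12) = vcomp K (hcomp K (id2 K s0) l12) R021 \<and>
    \<comment> \<open>(3)\<close>
     vcomp K R012 (hcomp K l01 (id2 K s2)) =
       vcomp K (hcomp K l01 (id2 K s2)) (hcomp K (id2 K s1) b02) \<and>
     vcomp K R021 (hcomp K l02 (id2 K s1)) =
       vcomp K (hcomp K l02 (id2 K s1)) (hcomp K (id2 K s2) b01) \<and>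
    \<comment> \<open>(4)\<close>
     vcomp K L012 (hcomp K (id2 K s0) b12) = L012 \<and>
     L012 = vcomp K (hcomp K (id2 K s0) b12) L012 \<and>
     vcomp K L102 (hcomp K (id2 K s1) b02) = L102 \<and>
     L102 = vcomp K (hcomp K (id2 K s1) b02) L102 \<and>
    \<comment> \<open>(5)\<close>
     vcomp K L012 (hcomp K l01 (id2 K s2)) = vcomp K (hcomp K l01 (id2 K s2)) L102 \<and>
    \<comment> \<open>(6)\<close>
     vcomp K L012 (hcomp K (id2 K s0) l12) =
       vcomp K (hcomp K (id2 K s0) l12) (hcomp K b02 (id2 K s1)) \<and>
     vcomp K L102 (hcomp K (id2 K s1) l02) =
       vcomp K (hcomp K (id2 K s1) l02) (hcomp K b12 (id2 K s0)) \<and>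
    \<comment> \<open>(7)\<close>
     vcomp K L012 R012 = vcomp K L012 (hcomp K b01 (id2 K s2)) \<and>
     vcomp K L012 (hcomp K b01 (id2 K s2)) = vcomp K R012 (hcomp K (id2 K s0) b12) \<and>
     vcomp K R012 (hcomp K (id2 K s0) b12) = vcomp K R012 L012"
proof -
  interpret W: W3 K A s0 sb0 mu0 eta0 s1 sb1 mu1 eta1 s2 sb2 mu2 eta2 l01 l02 l12
    using W3_I[OF assms(1,2)] .
  interpret V: W3 "revK K" A s2 sb2 mu2 eta2 s1 sb1 mu1 eta1 s0 sb0 mu0 eta0 l12 l02 l01
    using W3_I[OF two_category_rev[OF assms(1)] wdl2_rev[OF assms(2)]] .
  have cw: "cl_wdl K A s1 sb1 mu1 eta1 s0 sb0 mu0 eta0 l01" "cl_wdl K A s2 sb2 mu2 eta2 s0 sb0 mu0 eta0 l02"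
     "cl_wdl K A s2 sb2 mu2 eta2 s1 sb1 mu1 eta1 l12"
    using assms(2) unfolding wdl2_cell_def by auto
  have eR012: "R012 = W.P12.R" unfolding R012_def W.P12.R_def ..
  have eR021: "R021 = W.P21.R" unfolding R021_def W.P21.R_def ..
  have eL012: "L012 = W.Lr" unfolding L012_def W.Lr_def ..
  have eL012': "L012 = V.P12.R" unfolding L012_def V.P12.R_def
    by (rule W.rlam_rev[symmetric]) (simp_all add: W.L12.hom_l)
  have eL102': "L102 = V.P21.R" unfolding L102_def V.P21.R_def
    by (rule W.rlam_rev[symmetric]) (simp_all add: W.L02.hom_l)
  have eR012': "R012 = V.Lr" unfolding R012_def V.Lr_def
    using V.rlam_rev[of s2 s1 s0 l01 mu0 eta0 l02] V.L12.hom_l unfolding revK_revK by simp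
  have eb12: "wdl_idem (revK K) sb1 sb2 mu2 eta2 l12 = b12"
    unfolding b12_def idem_rev wdl_F[OF assms(1) cw(3)] ..
  have eb02: "wdl_idem (revK K) sb0 sb2 mu2 eta2 l02 = b02"
    unfolding b02_def idem_rev wdl_F[OF assms(1) cw(2)] ..
  have c3: "comp1 K (comp1 K s0 s1) s2 = comp1 K s0 (comp1 K s1 s2)"
     "comp1 K (comp1 K s1 s0) s2 = comp1 K s1 (comp1 K s0 s2)"
    using W.comp1_assoc W.Z.ob_t W.O.ob_t W.T.ob_t unfolding W.ob_def by auto
  have i1: "idem_2cell K (comp1 K s0 (comp1 K s1 s2)) R012" using W.P12.R_idem2 eR012 by simp
  have i2: "idem_2cell K (comp1 K s0 (comp1 K s2 s1)) R021" using W.P21.R_idem2 eR021 by simp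
  have i3: "idem_2cell K (comp1 K s0 (comp1 K s1 s2)) L012" using V.P12.R_idem2 eL012' c3
    by (simp add: idem_2cell_rev)
  have i4: "idem_2cell K (comp1 K s1 (comp1 K s0 s2)) L102" using V.P21.R_idem2 eL102' c3
    by (simp add: idem_2cell_rev)
  have x1: "vcomp K R012 (hcomp K b01 (id2 K s2)) = R012" "R012 = vcomp K (hcomp K b01 (id2 K s2)) R012"
    using W.P12.p1a W.P12.p1b unfolding eR012 b01_def by auto
  have x2: "vcomp K R021 (hcomp K b02 (id2 K s1)) = R021" "R021 = vcomp K (hcomp K b02 (id2 K s1)) R021"
    using W.P21.p1a W.P21.p1b unfolding eR021 b02_def by auto
  have x3: "vcomp K R012 (hcomp K (id2 K s0) l12) = vcomp K (hcomp K (id2 K s0) l12) R021"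
    using W.W3_2 unfolding eR012 eR021 .
  have x4: "vcomp K R012 (hcomp K l01 (id2 K s2)) = vcomp K (hcomp K l01 (id2 K s2)) (hcomp K (id2 K s1) b02)"
    "vcomp K R021 (hcomp K l02 (id2 K s1)) = vcomp K (hcomp K l02 (id2 K s1)) (hcomp K (id2 K s2) b01)"
    using W.P12.p3 W.P21.p3 unfolding eR012 eR021 b01_def b02_def by auto
  have x5: "vcomp K L012 (hcomp K (id2 K s0) b12) = L012" "L012 = vcomp K (hcomp K (id2 K s0) b12) L012"
    using V.P12.p1a V.P12.p1b unfolding eL012'[symmetric] eb12 by auto
  have x6: "vcomp K L102 (hcomp K (id2 K s1) b02) = L102" "L102 = vcomp K (hcomp K (id2 K s1) b02) L102"
    using V.P21.p1a V.P21.p1b unfolding eL102'[symmetric] eb02 by auto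
  have x7: "vcomp K L012 (hcomp K l01 (id2 K s2)) = vcomp K (hcomp K l01 (id2 K s2)) L102"
    using V.W3_2 unfolding eL012'[symmetric] eL102'[symmetric] by simp
  have x8: "vcomp K L012 (hcomp K (id2 K s0) l12) = vcomp K (hcomp K (id2 K s0) l12) (hcomp K b02 (id2 K s1))"
    "vcomp K L102 (hcomp K (id2 K s1) l02) = vcomp K (hcomp K (id2 K s1) l02) (hcomp K b12 (id2 K s0))"
    using V.P12.p3 V.P21.p3 unfolding eL012'[symmetric] eL102'[symmetric] eb12 eb02 by auto
  have yA: "vcomp K L012 R012 = vcomp K L012 (hcomp K b01 (id2 K s2))"
    using W.W3_A unfolding eL012 eR012 b01_def .
  have yB: "vcomp K R012 L012 = vcomp K R012 (hcomp K (id2 K s0) b12)"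
    using V.W3_A unfolding eL012'[symmetric] eR012'[symmetric] eb12 by simp
  have yC: "vcomp K L012 R012 = vcomp K R012 L012"
    using W.W3_C unfolding eL012 eR012 .
  show ?thesis using i1 i2 i3 i4 x1 x2 x3 x4 x5 x6 x7 x8 yA yB yC by simp
qed

end
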